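(* Let $j\in\mathbb Z$ and let $\lambda$ be a partition with an addable node $\mathfrak l$ in column $j$, and let $\lambda^+=\lambda\cup\{\mathfrak l\}$. Then \[F(\lambda^+)+\sum_{x\in X_\lambda}F(\lambda^{[x]})=2F(\lambda).\]
   Context: Partitions are identified with Young diagrams $\{(a,b)\in\mathbb N^2:b\le\lambda_a\}$; nodes are elements of $\mathbb N^2$; $(a,b)$ has height $\operatorname{ht}(a,b)=a+b$ and lies in column $b-a$. Addable node: a node not in $\lambda$ whose addition gives a partition; removable node: a node of $\lambda$ whose removal gives a partition. $X_\lambda$ (relative to $\mathfrak l$) is the set of integers $x$ such that $\lambda$ has a removable node $\mathfrak n$ in column $j+x$ with $\operatorname{ht}(\mathfrak n)=\operatorname{ht}(\mathfrak l)-1$ and $\operatorname{ht}(\mathfrak p)<\operatorname{ht}(\mathfrak l)$ for all nodes $\mathfrak p\in\lambda$ in all columns strictly between $j$ and $j+x$. For $x\in X_\lambda$ with $x>0$, $\lambda^{[x]}$ is obtained from $\lambda$ by removing the highest node of $\lambda$ in each of columns $j+1,\dots,j+x$; for $x<0$, by removing the highest node in each of columns $j+x,\dots,j-1$. The function $F$ is defined recursively: $F(\varnothing)=1$; for $\lambda\ne\varnothing$ choose a node $(a,b)$ of $\lambda$ with $a+b$ maximal, and set $F(\lambda)=\binom{a+b}{a}F((\lambda_{a+1},\lambda_{a+2},\dots))\,F((\max\{\lambda_1-b,0\},\max\{\lambda_2-b,0\},\dots))$; this is independent of the choice of $(a,b)$. *)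

theory Defs
  imports Main
begin

text \<open>Nodes are pairs (a,b) of positive naturals (row a, column-index b).
  A partition is identified with its (finite) Young diagram
  {(a,b). 1 \<le> a, 1 \<le> b \<le> lambda_a}.\<close>

type_synonym node = "nat \<times> nat"

definition is_partition :: "node set \<Rightarrow> bool" where
  "is_partition D \<longleftrightarrow> finite D \<and>
     (\<forall>(a,b)\<in>D. 1 \<le> a \<and> 1 \<le> b \<and>
        (\<forall>a' b'. 1 \<le> a' \<and> a' \<le> a \<and> 1 \<le> b' \<and> b' \<le> b \<longrightarrow> (a',b') \<in> D))"

definition ht :: "node \<Rightarrow> nat" where
  "ht n = fst n + snd n"

definition col :: "node \<Rightarrow> int" where
  "col n = int (snd n) - int (fst n)"

definition addable :: "node set \<Rightarrow> node \<Rightarrow> bool" where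
  "addable D n \<longleftrightarrow> n \<notin> D \<and> is_partition (insert n D)"

definition removable :: "node set \<Rightarrow> node \<Rightarrow> bool" where
  "removable D n \<longleftrightarrow> n \<in> D \<and> is_partition (D - {n})"

definition rows_below :: "node set \<Rightarrow> nat \<Rightarrow> node set" where
  "rows_below D a = (\<lambda>(x,y). (x - a, y)) ` {p \<in> D. fst p > a}"

definition cols_right :: "node set \<Rightarrow> nat \<Rightarrow> node set" where
  "cols_right D b = (\<lambda>(x,y). (x, y - b)) ` {p \<in> D. snd p > b}"

definition top_node :: "node set \<Rightarrow> node" where
  "top_node D = (SOME n. n \<in> D \<and> (\<forall>m\<in>D. ht m \<le> ht n))"

lemma top_node_prop:
  assumes "finite D" "D \<noteq> {}"
  shows "top_node D \<in> D \<and> (\<forall>m\<in>D. ht m \<le> ht (top_node D))"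
proof -
  obtain n where "n \<in> D" "ht n = Max (ht ` D)"
    using assms by (metis (mono_tags, lifting) Max_in finite_imageI image_iff image_is_empty)
  then have "\<exists>n. n \<in> D \<and> (\<forall>m\<in>D. ht m \<le> ht n)"
    using assms by (metis Max_ge finite_imageI imageI)
  then show ?thesis unfolding top_node_def by (rule someI_ex)
qed

lemma card_rows_below_less:
  assumes "finite D" "(a,b) \<in> D"
  shows "card (rows_below D a) < card D"
proof -
  have "card (rows_below D a) \<le> card {p \<in> D. fst p > a}"
    unfolding rows_below_def by (rule card_image_le) (use assms in auto)
  also have "\<dots> < card D"
    by (rule psubset_card_mono) (use assms in force)+
  finally show ?thesis .
qed

lemma card_cols_right_less:
  assumes "finite D" "(a,b) \<in> D"
  shows "card (cols_right D b) < card D"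
proof -
  have "card (cols_right D b) \<le> card {p \<in> D. snd p > b}"
    unfolding cols_right_def by (rule card_image_le) (use assms in auto)
  also have "\<dots> < card D"
    by (rule psubset_card_mono) (use assms in force)+
  finally show ?thesis .
qed

function F :: "node set \<Rightarrow> nat" where
  "F D = (if \<not> is_partition D \<or> D = {} then 1
          else ((fst (top_node D) + snd (top_node D)) choose fst (top_node D))
               * F (rows_below D (fst (top_node D)))
               * F (cols_right D (snd (top_node D))))"
  by pat_completeness auto
termination
proof (relation "measure card")
  show "wf (measure card)" by simp
next
  fix D :: "node set"
  assume "\<not> (\<not> is_partition D \<or> D = {})"
  then have f: "finite D" and ne: "D \<noteq> {}" by (auto simp: is_partition_def)
  then have "top_node D \<in> D" using top_node_prop by blast
  then have "(fst (top_node D), snd (top_node D)) \<in> D" by simp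
  then show "(rows_below D (fst (top_node D)), D) \<in> measure card"
    and "(cols_right D (snd (top_node D)), D) \<in> measure card"
    using card_rows_below_less[OF f] card_cols_right_less[OF f] by (metis in_measure)+
qed

declare F.simps [simp del]

definition Xset :: "node set \<Rightarrow> node \<Rightarrow> int set" where
  "Xset D l = {x. \<exists>n. removable D n \<and> col n = col l + x \<and> ht n + 1 = ht l \<and>
      (\<forall>p\<in>D. min (col l) (col l + x) < col p \<and> col p < max (col l) (col l + x)
               \<longrightarrow> ht p < ht l)}"

definition highest_in_col :: "node set \<Rightarrow> int \<Rightarrow> node set" where
  "highest_in_col D c = {p \<in> D. col p = c \<and> (\<forall>q\<in>D. col q = c \<longrightarrow> ht q \<le> ht p)}"

definition bracket :: "node set \<Rightarrow> int \<Rightarrow> int \<Rightarrow> node set" where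
  "bracket D j x =
     (if x > 0 then D - (\<Union>c\<in>{j+1..j+x}. highest_in_col D c)
      else if x < 0 then D - (\<Union>c\<in>{j+x..j-1}. highest_in_col D c)
      else D)"

end

theory Submission
  imports Defs
begin

lemma ht_simp[simp]: "ht (a,b) = a + b" by (simp add: ht_def)
lemma col_simp[simp]: "col (a,b) = int b - int a" by (simp add: col_def)

lemma mem_rows_below[simp]: "(x,y) \<in> rows_below D a \<longleftrightarrow> 0 < x \<and> (x+a,y) \<in> D"
  unfolding rows_below_def by (auto simp: image_iff)

lemma mem_cols_right[simp]: "(x,y) \<in> cols_right D b \<longleftrightarrow> 0 < y \<and> (x,y+b) \<in> D"
  unfolding cols_right_def by (auto simp: image_iff)

lemma finite_rows_below: "finite D \<Longrightarrow> finite (rows_below D a)"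
  unfolding rows_below_def by auto
lemma finite_cols_right: "finite D \<Longrightarrow> finite (cols_right D a)"
  unfolding cols_right_def by auto

lemma part_fin: "is_partition D \<Longrightarrow> finite D"
  by (simp add: is_partition_def)
lemma part_pos: "is_partition D \<Longrightarrow> (a,b) \<in> D \<Longrightarrow> 1 \<le> a \<and> 1 \<le> b"
  unfolding is_partition_def by blast
lemma part_down: "is_partition D \<Longrightarrow> (a,b) \<in> D \<Longrightarrow> 1 \<le> a' \<Longrightarrow> a' \<le> a \<Longrightarrow> 1 \<le> b' \<Longrightarrow> b' \<le> b \<Longrightarrow> (a',b') \<in> D"
  unfolding is_partition_def by blast

lemma part_intro:
  assumes fin: "finite D"
    and pos: "\<And>a b. (a,b)\<in>D \<Longrightarrow> 1 \<le> a \<and> 1 \<le> b"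
    and up: "\<And>a b. (a,b)\<in>D \<Longrightarrow> 1 < a \<Longrightarrow> (a-1,b)\<in>D"
    and left: "\<And>a b. (a,b)\<in>D \<Longrightarrow> 1 < b \<Longrightarrow> (a,b-1)\<in>D"
  shows "is_partition D"
proof -
  have A: "(a-d,b) \<in> D" if "(a,b) \<in> D" "d < a" for a b d
    using that
  proof (induction d)
    case 0 then show ?case by simp
  next
    case (Suc d)
    then have "(a-d,b) \<in> D" by simp
    moreover have "1 < a - d" using Suc by simp
    ultimately have "(a-d-1,b)\<in>D" using up by blast
    then show ?case by simp
  qed
  have B: "(a,b-d) \<in> D" if "(a,b) \<in> D" "d < b" for a b d
    using that
  proof (induction d)
    case 0 then show ?case by simp
  next
    case (Suc d)
    then have "(a,b-d) \<in> D" by simp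
    moreover have "1 < b - d" using Suc by simp
    ultimately have "(a,b-d-1)\<in>D" using left by blast
    then show ?case by simp
  qed
  have C: "(a',b') \<in> D" if "(a,b) \<in> D" "1 \<le> a'" "a' \<le> a" "1 \<le> b'" "b' \<le> b" for a b a' b'
  proof -
    have "(a-(a-a'),b) \<in> D" using A[of a b "a-a'"] that by simp
    then have "(a',b) \<in> D" using that by simp
    then have "(a', b - (b-b')) \<in> D" using B[of a' b "b-b'"] that by simp
    then show ?thesis using that by simp
  qed
  show ?thesis unfolding is_partition_def
    using fin pos C by fast
qed

lemma part_rows_below: "is_partition D \<Longrightarrow> is_partition (rows_below D a)"
  apply (rule part_intro)
     apply (simp add: finite_rows_below part_fin)
  subgoal by (simp, drule part_pos, auto)
  subgoal for x y using part_pos[of D "x+a" y] part_down[of D "x+a" y "x-1+a" y] by auto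
  subgoal for x y using part_pos[of D "x+a" y] part_down[of D "x+a" y "x+a" "y-1"] by auto
  done

lemma part_cols_right: "is_partition D \<Longrightarrow> is_partition (cols_right D a)"
  apply (rule part_intro)
     apply (simp add: finite_cols_right part_fin)
  subgoal by (simp, drule part_pos, auto)
  subgoal for x y using part_pos[of D x "y+a"] part_down[of D x "y+a" "x-1" "y+a"] by auto
  subgoal for x y using part_pos[of D x "y+a"] part_down[of D x "y+a" x "y-1+a"] by auto
  done


lemma hic_iff:
  assumes P: "is_partition D"
  shows "(a,b) \<in> highest_in_col D k \<longleftrightarrow> (a,b) \<in> D \<and> int b - int a = k \<and> (a+1,b+1) \<notin> D"
proof
  assume "(a,b) \<in> highest_in_col D k"
  then have h: "(a,b) \<in> D" "int b - int a = k" "\<forall>q\<in>D. col q = k \<longrightarrow> ht q \<le> a+b"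
    unfolding highest_in_col_def by auto
  have "(a+1,b+1) \<notin> D"
  proof
    assume "(a+1,b+1) \<in> D"
    with h(3) have "a+1+(b+1) \<le> a+b" using h(2) by fastforce
    then show False by simp
  qed
  with h show "(a,b) \<in> D \<and> int b - int a = k \<and> (a+1,b+1) \<notin> D" by simp
next
  assume h: "(a,b) \<in> D \<and> int b - int a = k \<and> (a+1,b+1) \<notin> D"
  have "ht q \<le> a+b" if q: "q \<in> D" "col q = k" for q
  proof (cases q)
    case (Pair a' b')
    show ?thesis
    proof (cases "a' > a")
      case True
      then have "b' > b" using q h Pair by simp
      then have "(a+1,b+1) \<in> D"
        using part_down[OF P, of a' b' "a+1" "b+1"] q Pair True by simp
      with h show ?thesis by simp
    next
      case False
      then have "b' \<le> b" using q h Pair by simp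
      then show ?thesis using False Pair by simp
    qed
  qed
  then show "(a,b) \<in> highest_in_col D k" unfolding highest_in_col_def using h by auto
qed

definition rng :: "int \<Rightarrow> int \<Rightarrow> int set" where
  "rng j x = (if x > 0 then {j+1..j+x} else if x < 0 then {j+x..j-1} else {})"

lemma rng_iff: "k \<in> rng j x \<longleftrightarrow> (0 < x \<and> j < k \<and> k \<le> j + x) \<or> (x < 0 \<and> j + x \<le> k \<and> k < j)"
  unfolding rng_def by auto

lemma bracket_rng: "bracket D j x = D - (\<Union>k\<in>rng j x. highest_in_col D k)"
  unfolding bracket_def rng_def by auto

lemma mem_bracket:
  assumes P: "is_partition D"
  shows "(a,b) \<in> bracket D j x \<longleftrightarrow> (a,b) \<in> D \<and> \<not> (int b - int a \<in> rng j x \<and> (a+1,b+1) \<notin> D)"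
  unfolding bracket_rng by (auto simp: hic_iff[OF P])

lemma bracket_sub: "bracket D j x \<subseteq> D"
  unfolding bracket_rng by blast

lemma removable_iff:
  assumes P: "is_partition D"
  shows "removable D (a,b) \<longleftrightarrow> (a,b) \<in> D \<and> (a+1,b) \<notin> D \<and> (a,b+1) \<notin> D"
proof
  assume "removable D (a,b)"
  then have h: "(a,b) \<in> D" "is_partition (D - {(a,b)})" unfolding removable_def by auto
  have "(a+1,b) \<notin> D"
  proof
    assume "(a+1,b) \<in> D"
    then have "(a+1,b) \<in> D - {(a,b)}" by simp
    then have "(a,b) \<in> D - {(a,b)}" using part_down[OF h(2), of "a+1" b a b] part_pos[OF P h(1)] by simp
    then show False by simp
  qed
  moreover have "(a,b+1) \<notin> D"
  proof
    assume "(a,b+1) \<in> D"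
    then have "(a,b+1) \<in> D - {(a,b)}" by simp
    then have "(a,b) \<in> D - {(a,b)}" using part_down[OF h(2), of a "b+1" a b] part_pos[OF P h(1)] by simp
    then show False by simp
  qed
  ultimately show "(a,b) \<in> D \<and> (a+1,b) \<notin> D \<and> (a,b+1) \<notin> D" using h by simp
next
  assume h: "(a,b) \<in> D \<and> (a+1,b) \<notin> D \<and> (a,b+1) \<notin> D"
  have "is_partition (D - {(a,b)})"
  proof (rule part_intro)
    show "finite (D - {(a,b)})" using part_fin[OF P] by simp
    show "1 \<le> x \<and> 1 \<le> y" if "(x,y) \<in> D - {(a,b)}" for x y using part_pos[OF P] that by blast
    show "(x-1,y) \<in> D - {(a,b)}" if "(x,y) \<in> D - {(a,b)}" "1 < x" for x y
    proof -
      have "(x-1,y) \<in> D" using part_down[OF P, of x y "x-1" y] part_pos[OF P, of x y] that by auto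
      moreover have "(x-1,y) \<noteq> (a,b)" proof assume "(x-1,y) = (a,b)" then have "x = a+1" "y = b" using that by auto then show False using h that by auto qed
      ultimately show ?thesis by simp
    qed
    show "(x,y-1) \<in> D - {(a,b)}" if "(x,y) \<in> D - {(a,b)}" "1 < y" for x y
    proof -
      have "(x,y-1) \<in> D" using part_down[OF P, of x y x "y-1"] part_pos[OF P, of x y] that by auto
      moreover have "(x,y-1) \<noteq> (a,b)" proof assume "(x,y-1) = (a,b)" then have "y = b+1" "x = a" using that by auto then show False using h that by auto qed
      ultimately show ?thesis by simp
    qed
  qed
  then show "removable D (a,b)" unfolding removable_def using h by simp
qed

lemma addable_iff:
  assumes P: "is_partition D"
  shows "addable D (r,c) \<longleftrightarrow> (r,c) \<notin> D \<and> 1 \<le> r \<and> 1 \<le> c \<and> (1 < r \<longrightarrow> (r-1,c) \<in> D) \<and> (1 < c \<longrightarrow> (r,c-1) \<in> D)"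
proof
  assume "addable D (r,c)"
  then have h: "(r,c) \<notin> D" "is_partition (insert (r,c) D)" unfolding addable_def by auto
  have p: "1 \<le> r \<and> 1 \<le> c" using part_pos[OF h(2), of r c] by simp
  have "(r-1,c) \<in> D" if "1 < r"
  proof -
    have "(r-1,c) \<in> insert (r,c) D" using part_down[OF h(2), of r c "r-1" c] p that by simp
    then show ?thesis using that by auto
  qed
  moreover have "(r,c-1) \<in> D" if "1 < c"
  proof -
    have "(r,c-1) \<in> insert (r,c) D" using part_down[OF h(2), of r c r "c-1"] p that by simp
    then show ?thesis using that by auto
  qed
  ultimately show "(r,c) \<notin> D \<and> 1 \<le> r \<and> 1 \<le> c \<and> (1 < r \<longrightarrow> (r-1,c) \<in> D) \<and> (1 < c \<longrightarrow> (r,c-1) \<in> D)"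
    using h p by simp
next
  assume h: "(r,c) \<notin> D \<and> 1 \<le> r \<and> 1 \<le> c \<and> (1 < r \<longrightarrow> (r-1,c) \<in> D) \<and> (1 < c \<longrightarrow> (r,c-1) \<in> D)"
  have "is_partition (insert (r,c) D)"
  proof (rule part_intro)
    show "finite (insert (r,c) D)" using part_fin[OF P] by simp
    show "1 \<le> x \<and> 1 \<le> y" if "(x,y) \<in> insert (r,c) D" for x y using part_pos[OF P] that h by blast
    show "(x-1,y) \<in> insert (r,c) D" if "(x,y) \<in> insert (r,c) D" "1 < x" for x y
    proof (cases "(x,y) = (r,c)")
      case True then show ?thesis using h that by auto
    next
      case False
      then have "(x,y) \<in> D" using that by auto
      then have "(x-1,y) \<in> D" using part_down[OF P, of x y "x-1" y] part_pos[OF P, of x y] that by auto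
      then show ?thesis by simp
    qed
    show "(x,y-1) \<in> insert (r,c) D" if "(x,y) \<in> insert (r,c) D" "1 < y" for x y
    proof (cases "(x,y) = (r,c)")
      case True then show ?thesis using h that by auto
    next
      case False
      then have "(x,y) \<in> D" using that by auto
      then have "(x,y-1) \<in> D" using part_down[OF P, of x y x "y-1"] part_pos[OF P, of x y] that by auto
      then show ?thesis by simp
    qed
  qed
  then show "addable D (r,c)" unfolding addable_def using h by simp
qed


lemma F_empty[simp]: "F {} = 1" by (simp add: F.simps)

lemma rows_below_rows_below: "rows_below (rows_below D a) a' = rows_below D (a'+a)"
  by (auto simp: set_eq_iff add.assoc)
lemma cols_right_cols_right: "cols_right (cols_right D b) b' = cols_right D (b'+b)"
  by (auto simp: set_eq_iff add.assoc)
lemma rows_cols_comm: "cols_right (rows_below D a) b = rows_below (cols_right D b) a"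
  by (auto simp: set_eq_iff)

lemma F_at:
  assumes "is_partition D" "(a,b) \<in> D" "\<forall>p\<in>D. ht p \<le> a+b"
  shows "F D = ((a+b) choose a) * F (rows_below D a) * F (cols_right D b)"
  using assms
proof (induction "card D" arbitrary: D a b rule: less_induct)
  case less
  note P = less.prems(1)
  have fin: "finite D" using part_fin[OF P] .
  define E where "E a b = ((a+b) choose a) * F (rows_below D a) * F (cols_right D b)" for a b
  have swap: "E a1 b1 = E a2 b2" if h: "(a1,b1)\<in>D" "(a2,b2)\<in>D" "a1+b1 = a+b" "a2+b2 = a+b" "a1 < a2" for a1 b1 a2 b2
  proof -
    have b12: "b2 < b1" using h by simp
    have c1: "card (rows_below D a1) < card D" using card_rows_below_less[OF fin h(1)] .
    have c2: "card (cols_right D b2) < card D" using card_cols_right_less[OF fin h(2)] .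
    have m1: "(a2-a1, b2) \<in> rows_below D a1" using h by simp
    have hm1: "\<forall>p\<in>rows_below D a1. ht p \<le> (a2-a1)+b2"
    proof
      fix p assume "p \<in> rows_below D a1"
      then obtain x y where p: "p = (x,y)" "0 < x" "(x+a1,y) \<in> D" by (cases p) auto
      then have "x + a1 + y \<le> a+b" using bspec[OF less.prems(3) p(3)] by simp
      then show "ht p \<le> (a2-a1)+b2" using p h by simp
    qed
    have m2: "(a1, b1-b2) \<in> cols_right D b2" using h b12 by simp
    have hm2: "\<forall>p\<in>cols_right D b2. ht p \<le> a1+(b1-b2)"
    proof
      fix p assume "p \<in> cols_right D b2"
      then obtain x y where p: "p = (x,y)" "0 < y" "(x,y+b2) \<in> D" by (cases p) auto
      then have "x + (y+b2) \<le> a+b" using bspec[OF less.prems(3) p(3)] by simp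
      then show "ht p \<le> a1+(b1-b2)" using p h by simp
    qed
    have e1: "rows_below (rows_below D a1) (a2-a1) = rows_below D a2"
      using rows_below_rows_below[of D a1 "a2-a1"] h(5) by simp
    have e2: "cols_right (cols_right D b2) (b1-b2) = cols_right D b1"
      using cols_right_cols_right[of D b2 "b1-b2"] b12 by simp
    have F1: "F (rows_below D a1) = ((a2-a1+b2) choose (a2-a1)) * F (rows_below D a2) * F (cols_right (rows_below D a1) b2)"
      using less.hyps[OF c1 part_rows_below[OF P] m1 hm1] unfolding e1 .
    have F2: "F (cols_right D b2) = ((a1+(b1-b2)) choose a1) * F (cols_right (rows_below D a1) b2) * F (cols_right D b1)"
      using less.hyps[OF c2 part_cols_right[OF P] m2 hm2] unfolding e2 rows_cols_comm .
    have bin: "((a1+b1) choose a1) * ((a2-a1+b2) choose (a2-a1)) = ((a2+b2) choose a2) * ((a1+(b1-b2)) choose a1)"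
    proof -
      have E1: "((a2+b2) choose a2) * (a2 choose a1) = ((a2+b2) choose a1) * ((a2+b2-a1) choose (a2-a1))"
        using choose_mult[of a1 a2 "a2+b2"] h by simp
      have q: "a2+b2-a1 = a2-a1+b2" "a1+(b1-b2) = a2" "a1+b1 = a2+b2" using h by auto
      show ?thesis unfolding q using E1 unfolding q by (simp add: mult.commute)
    qed
    have "E a1 b1 = (((a1+b1) choose a1) * ((a2-a1+b2) choose (a2-a1))) * (F (rows_below D a2) * F (cols_right (rows_below D a1) b2) * F (cols_right D b1))"
      unfolding E_def F1 by (simp add: mult_ac)
    also have "\<dots> = (((a2+b2) choose a2) * ((a1+(b1-b2)) choose a1)) * (F (rows_below D a2) * F (cols_right (rows_below D a1) b2) * F (cols_right D b1))"
      unfolding bin ..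
    also have "\<dots> = E a2 b2"
      unfolding E_def F2 by (simp add: mult_ac)
    finally show ?thesis .
  qed
  obtain a0 b0 where t: "top_node D = (a0,b0)" by (cases "top_node D") auto
  have ne: "D \<noteq> {}" using less.prems(2) by auto
  have tp: "(a0,b0) \<in> D" "\<forall>m\<in>D. ht m \<le> a0+b0" using top_node_prop[OF fin ne] t by auto
  have "ht (a,b) \<le> a0+b0" using bspec[OF tp(2) less.prems(2)] .
  moreover have "ht (a0,b0) \<le> a+b" using bspec[OF less.prems(3) tp(1)] .
  ultimately have h0: "a0+b0 = a+b" by simp
  have FD: "F D = E a0 b0" unfolding E_def using F.simps[of D] P ne t by simp
  have "E a0 b0 = E a b"
  proof (cases "a0 = a")
    case True then show ?thesis using h0 by simp
  next
    case False
    then show ?thesis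
    proof (cases "a0 < a")
      case True then show ?thesis using swap[OF tp(1) less.prems(2) h0] by simp
    next
      case False
      then have "a < a0" using \<open>a0 \<noteq> a\<close> by simp
      then show ?thesis using swap[OF less.prems(2) tp(1) refl h0] by simp
    qed
  qed
  then show ?case using FD E_def by simp
qed


lemma pair_set_eqI: "(\<And>u v. (u,v) \<in> A \<longleftrightarrow> (u,v) \<in> B) \<Longrightarrow> A = B"
  by auto

lemma row1:
  assumes P: "is_partition D" and r1: "1 \<le> k \<Longrightarrow> (1,k) \<in> D" and H: "\<forall>p\<in>D. ht p \<le> k+1"
  shows "F D = (k+1) * F (rows_below D 1)"
proof (cases "k = 0")
  case True
  have "D = {}"
  proof (rule ccontr)
    assume "D \<noteq> {}"
    then obtain u v where "(u,v) \<in> D" by auto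
    then show False using part_pos[OF P] bspec[OF H] True by fastforce
  qed
  then show ?thesis using True by (simp add: rows_below_def)
next
  case False
  have e: "cols_right D k = {}"
  proof (rule ccontr)
    assume "cols_right D k \<noteq> {}"
    then obtain p where p: "p \<in> cols_right D k" by blast
    obtain u v where "p = (u,v)" by (cases p)
    then have "0 < v" "(u,v+k) \<in> D" using p by auto
    then show False using part_pos[OF P, of u "v+k"] bspec[OF H \<open>(u,v+k) \<in> D\<close>] by simp
  qed
  have "F D = ((1+k) choose 1) * F (rows_below D 1) * F (cols_right D k)"
    by (rule F_at[OF P r1]) (use False H in auto)
  then show ?thesis using e by simp
qed

lemma rng_shift: "k \<in> rng (j + d) x \<longleftrightarrow> k - d \<in> rng j x"
  by (auto simp: rng_iff)

lemma bracket_rows_below: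
  assumes P: "is_partition D"
  shows "rows_below (bracket D j x) a = bracket (rows_below D a) (j + int a) x"
proof (rule pair_set_eqI)
  fix u v
  have e: "int v - int u \<in> rng (j + int a) x \<longleftrightarrow> int v - int (u+a) \<in> rng j x"
    by (simp add: rng_iff) arith
  show "(u,v) \<in> rows_below (bracket D j x) a \<longleftrightarrow> (u,v) \<in> bracket (rows_below D a) (j + int a) x"
    unfolding mem_rows_below mem_bracket[OF P] mem_bracket[OF part_rows_below[OF P]] e
    by (simp add: add_ac)
qed

lemma bracket_cols_right:
  assumes P: "is_partition D"
  shows "cols_right (bracket D j x) b = bracket (cols_right D b) (j - int b) x"
proof (rule pair_set_eqI)
  fix u v
  have e: "int v - int u \<in> rng (j - int b) x \<longleftrightarrow> int (v+b) - int u \<in> rng j x"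
    by (simp add: rng_iff) arith
  show "(u,v) \<in> cols_right (bracket D j x) b \<longleftrightarrow> (u,v) \<in> bracket (cols_right D b) (j - int b) x"
    unfolding mem_cols_right mem_bracket[OF P] mem_bracket[OF part_cols_right[OF P]] e
    by (simp add: add_ac)
qed

lemma bracket_id:
  assumes P: "is_partition D" and N: "\<And>u v. (u,v) \<in> D \<Longrightarrow> int v - int u \<notin> rng j x"
  shows "bracket D j x = D"
  by (rule pair_set_eqI) (auto simp: mem_bracket[OF P] N)

lemma top_unique:
  assumes P: "is_partition D" and h: "(a,b) \<in> D" "(a',b') \<in> D" "int b - int a = int b' - int a'"
    "(a+1,b+1) \<notin> D" "(a'+1,b'+1) \<notin> D"
  shows "a = a' \<and> b = b'"
proof -
  have "\<not> a < a'"
  proof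
    assume "a < a'"
    then have "b < b'" using h(3) by simp
    then have "(a+1,b+1) \<in> D" using part_down[OF P h(2), of "a+1" "b+1"] \<open>a < a'\<close> by simp
    then show False using h(4) by simp
  qed
  moreover have "\<not> a' < a"
  proof
    assume "a' < a"
    then have "b' < b" using h(3) by simp
    then have "(a'+1,b'+1) \<in> D" using part_down[OF P h(1), of "a'+1" "b'+1"] \<open>a' < a\<close> by simp
    then show False using h(5) by simp
  qed
  ultimately show ?thesis using h(3) by simp
qed

lemma col_nodes_addable:
  assumes P: "is_partition D" and A: "addable D (r,c)" and h: "(u,v) \<in> D" "int v - int u = int c - int r"
  shows "(u+1,v) \<in> D \<and> (u,v+1) \<in> D"
proof -
  have a: "(r,c) \<notin> D" "1 \<le> r" "1 \<le> c" "1 < r \<longrightarrow> (r-1,c) \<in> D" "1 < c \<longrightarrow> (r,c-1) \<in> D"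
    using A addable_iff[OF P] by auto
  have pu: "1 \<le> u" "1 \<le> v" using part_pos[OF P h(1)] by auto
  have "u < r"
  proof (rule ccontr)
    assume "\<not> u < r"
    then have "r \<le> u" "c \<le> v" using h(2) by auto
    then have "(r,c) \<in> D" using part_down[OF P h(1), of r c] a by simp
    then show False using a by simp
  qed
  then have "v < c" using h(2) by simp
  have "(u+1,v) \<in> D" using part_down[OF P, of r "c-1" "u+1" v] a \<open>u < r\<close> \<open>v < c\<close> pu by simp
  moreover have "(u,v+1) \<in> D" using part_down[OF P, of "r-1" c u "v+1"] a \<open>u < r\<close> \<open>v < c\<close> pu by simp
  ultimately show ?thesis by simp
qed

lemma Xset_fin: "finite D \<Longrightarrow> finite (Xset D l)"
proof -
  assume "finite D"
  have "Xset D l \<subseteq> (\<lambda>n. col n - col l) ` D"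
    unfolding Xset_def removable_def by force
  then show ?thesis using \<open>finite D\<close> finite_subset by blast
qed

lemma Xset_0: "0 \<notin> Xset D l"
proof
  assume "0 \<in> Xset D l"
  then obtain n where n: "col n = col l" "ht n + 1 = ht l" unfolding Xset_def by auto
  obtain a b where "n = (a,b)" by (cases n)
  moreover obtain r c where "l = (r,c)" by (cases l)
  ultimately show False using n by simp presburger
qed

lemma Xset_top:
  assumes P: "is_partition D" and H: "\<forall>p\<in>D. ht p < ht l"
  shows "Xset D l = (\<lambda>n. col n - col l) ` {n\<in>D. ht n + 1 = ht l}"
proof
  show "Xset D l \<subseteq> (\<lambda>n. col n - col l) ` {n\<in>D. ht n + 1 = ht l}"
    unfolding Xset_def removable_def by force
next
  show "(\<lambda>n. col n - col l) ` {n\<in>D. ht n + 1 = ht l} \<subseteq> Xset D l"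
  proof
    fix x assume "x \<in> (\<lambda>n. col n - col l) ` {n\<in>D. ht n + 1 = ht l}"
    then obtain n where n: "n \<in> D" "ht n + 1 = ht l" "x = col n - col l" by auto
    obtain a b where ab: "n = (a,b)" by (cases n)
    have "(a+1,b) \<notin> D"
    proof
      assume "(a+1,b) \<in> D" then show False using bspec[OF H \<open>(a+1,b) \<in> D\<close>] n ab by simp
    qed
    moreover have "(a,b+1) \<notin> D"
    proof
      assume "(a,b+1) \<in> D" then show False using bspec[OF H \<open>(a,b+1) \<in> D\<close>] n ab by simp
    qed
    ultimately have "removable D n" using removable_iff[OF P] n ab by simp
    moreover have "\<forall>p\<in>D. min (col l) (col l + x) < col p \<and> col p < max (col l) (col l + x) \<longrightarrow> ht p < ht l"
      using H by blast
    ultimately show "x \<in> Xset D l" unfolding Xset_def mem_Collect_eq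
      by (intro exI[of _ n]) (use n in auto)
  qed
qed


lemma bracket_part:
  assumes P: "is_partition D" and A: "addable D l" and X: "x \<in> Xset D l"
  shows "is_partition (bracket D (col l) x)"
proof -
  obtain r c where l: "l = (r,c)" by (cases l)
  define j where "j = col l"
  have j: "j = int c - int r" using l j_def by simp
  obtain n where n: "removable D n" "col n = col l + x" "ht n + 1 = ht l" using X unfolding Xset_def by auto
  obtain nx ny where nn: "n = (nx,ny)" by (cases n)
  have nD: "(nx,ny) \<in> D" "(nx+1,ny) \<notin> D" "(nx,ny+1) \<notin> D" using n(1) removable_iff[OF P] nn by auto
  have ntop: "(nx+1,ny+1) \<notin> D"
  proof
    assume "(nx+1,ny+1) \<in> D"
    then have "(nx+1,ny) \<in> D" using part_down[OF P, of "nx+1" "ny+1" "nx+1" ny] part_pos[OF P nD(1)] by simp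
    then show False using nD by simp
  qed
  have ncol: "int ny - int nx = j + x" using n(2) nn j_def by simp
  have Al: "addable D (r,c)" using A l by simp
  let ?E = "bracket D j x"
  have memE: "(u,v) \<in> ?E \<longleftrightarrow> (u,v) \<in> D \<and> \<not> (int v - int u \<in> rng j x \<and> (u+1,v+1) \<notin> D)" for u v
    using mem_bracket[OF P] .
  have "is_partition ?E"
  proof (rule part_intro)
    show "finite ?E" by (rule finite_subset[OF bracket_sub part_fin[OF P]])
    show "1 \<le> u \<and> 1 \<le> v" if "(u,v) \<in> ?E" for u v using that memE[of u v] part_pos[OF P, of u v] by simp
    show "(u-1,v) \<in> ?E" if uv: "(u,v) \<in> ?E" "1 < u" for u v
    proof (rule ccontr)
      assume nw: "(u-1,v) \<notin> ?E"
      have uD: "(u,v) \<in> D" using uv memE[of u v] by simp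
      have pv: "1 \<le> v" using part_pos[OF P uD] by simp
      have wD: "(u-1,v) \<in> D" using part_down[OF P uD, of "u-1" v] uv pv by simp
      have c1: "int v - int (u-1) \<in> rng j x" "(u-1+1,v+1) \<notin> D" using nw wD memE[of "u-1" v] by auto
      have c1': "(u,v+1) \<notin> D" using c1(2) uv by simp
      have "(u+1,v+1) \<notin> D"
      proof
        assume "(u+1,v+1) \<in> D"
        then have "(u,v+1) \<in> D" using part_down[OF P, of "u+1" "v+1" u "v+1"] uv by simp
        then show False using c1' by simp
      qed
      then have c2: "int v - int u \<notin> rng j x" using uv memE[of u v] by simp
      have ku: "int v - int (u-1) = int v - int u + 1" using uv by simp
      have cases: "(0 < x \<and> int v - int u = j) \<or> (x < 0 \<and> int v - int (u-1) = j + x)"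
        using c1(1) c2 unfolding ku rng_iff by auto
      then show False
      proof
        assume "0 < x \<and> int v - int u = j"
        then have "(u,v+1) \<in> D" using col_nodes_addable[OF P Al uD] j by simp
        then show False using c1' by simp
      next
        assume h: "x < 0 \<and> int v - int (u-1) = j + x"
        have "u - 1 = nx \<and> v = ny"
          using top_unique[OF P wD nD(1) _ _ ntop] h ncol c1(2) by simp
        then have "(nx+1,ny) \<in> D" using uD uv by auto
        then show False using nD by simp
      qed
    qed
    show "(u,v-1) \<in> ?E" if uv: "(u,v) \<in> ?E" "1 < v" for u v
    proof (rule ccontr)
      assume nw: "(u,v-1) \<notin> ?E"
      have uD: "(u,v) \<in> D" using uv memE[of u v] by simp
      have pu: "1 \<le> u" using part_pos[OF P uD] by simp
      have wD: "(u,v-1) \<in> D" using part_down[OF P uD, of u "v-1"] uv pu by simp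
      have c1: "int (v-1) - int u \<in> rng j x" "(u+1,v-1+1) \<notin> D" using nw wD memE[of u "v-1"] by auto
      have c1': "(u+1,v) \<notin> D" using c1(2) uv by simp
      have "(u+1,v+1) \<notin> D"
      proof
        assume "(u+1,v+1) \<in> D"
        then have "(u+1,v) \<in> D" using part_down[OF P, of "u+1" "v+1" "u+1" v] uv by simp
        then show False using c1' by simp
      qed
      then have c2: "int v - int u \<notin> rng j x" using uv memE[of u v] by simp
      have ku: "int (v-1) - int u = int v - int u - 1" using uv by simp
      have cases: "(0 < x \<and> int (v-1) - int u = j + x) \<or> (x < 0 \<and> int v - int u = j)"
        using c1(1) c2 unfolding ku rng_iff by auto
      then show False
      proof
        assume "x < 0 \<and> int v - int u = j"
        then have "(u+1,v) \<in> D" using col_nodes_addable[OF P Al uD] j by simp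
        then show False using c1' by simp
      next
        assume h: "0 < x \<and> int (v-1) - int u = j + x"
        have "u = nx \<and> v - 1 = ny"
          using top_unique[OF P wD nD(1) _ _ ntop] h ncol c1(2) by simp
        then have "(nx,ny+1) \<in> D" using uD uv by auto
        then show False using nD by simp
      qed
    qed
  qed
  then show ?thesis using j_def by simp
qed


lemma Xset_iff: "x \<in> Xset D l \<longleftrightarrow> (\<exists>a b. removable D (a,b) \<and> int b - int a = col l + x \<and> a + b + 1 = ht l \<and>
    (\<forall>u v. (u,v) \<in> D \<longrightarrow> min (col l) (col l + x) < int v - int u \<and> int v - int u < max (col l) (col l + x) \<longrightarrow> u + v < ht l))"
  unfolding Xset_def mem_Collect_eq split_paired_Ex Ball_def split_paired_All by simp

definition trn :: "node set \<Rightarrow> node set" where "trn D = prod.swap ` D"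

lemma mem_trn[simp]: "(u,v) \<in> trn D \<longleftrightarrow> (v,u) \<in> D"
  unfolding trn_def by force

lemma trn_trn[simp]: "trn (trn D) = D"
  by (rule pair_set_eqI) simp

lemma trn_empty[simp]: "trn {} = {}" unfolding trn_def by simp

lemma trn_insert: "trn (insert (r,c) D) = insert (c,r) (trn D)"
  by (rule pair_set_eqI) auto

lemma card_trn: "card (trn D) = card D"
  unfolding trn_def by (simp add: card_image)

lemma part_trn: "is_partition D \<Longrightarrow> is_partition (trn D)"
  apply (rule part_intro)
     apply (simp add: trn_def part_fin)
  subgoal for u v using part_pos[of D v u] by simp
  subgoal for u v using part_pos[of D v u] part_down[of D v u v "u-1"] by simp
  subgoal for u v using part_pos[of D v u] part_down[of D v u "v-1" u] by simp
  done

lemma rows_below_trn: "rows_below (trn D) a = trn (cols_right D a)"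
  by (rule pair_set_eqI) simp
lemma cols_right_trn: "cols_right (trn D) a = trn (rows_below D a)"
  by (rule pair_set_eqI) simp

lemma F_trn: "is_partition D \<Longrightarrow> F (trn D) = F D"
proof (induction "card D" arbitrary: D rule: less_induct)
  case less
  note P = less.prems
  show ?case
  proof (cases "D = {}")
    case True then show ?thesis by simp
  next
    case False
    have fin: "finite D" using part_fin[OF P] .
    obtain a b where t: "top_node D = (a,b)" by (cases "top_node D") auto
    have tp: "(a,b) \<in> D" "\<forall>m\<in>D. ht m \<le> a+b" using top_node_prop[OF fin False] t by auto
    have F1: "F D = ((a+b) choose a) * F (rows_below D a) * F (cols_right D b)"
      by (rule F_at[OF P tp])
    have tp': "(b,a) \<in> trn D" "\<forall>m\<in>trn D. ht m \<le> b+a"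
    proof -
      show "(b,a) \<in> trn D" using tp by simp
      show "\<forall>m\<in>trn D. ht m \<le> b+a"
      proof
        fix m assume "m \<in> trn D"
        then obtain u v where "m = (u,v)" "(v,u) \<in> D" by (cases m) auto
        then show "ht m \<le> b+a" using bspec[OF tp(2) \<open>(v,u) \<in> D\<close>] by simp
      qed
    qed
    have F2: "F (trn D) = ((b+a) choose b) * F (rows_below (trn D) b) * F (cols_right (trn D) a)"
      by (rule F_at[OF part_trn[OF P] tp'])
    have c1: "F (trn (cols_right D b)) = F (cols_right D b)"
      using less.hyps[OF card_cols_right_less[OF fin tp(1)] part_cols_right[OF P]] .
    have c2: "F (trn (rows_below D a)) = F (rows_below D a)"
      using less.hyps[OF card_rows_below_less[OF fin tp(1)] part_rows_below[OF P]] .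
    have bin: "(b+a) choose b = (a+b) choose a"
      using binomial_symmetric[of b "a+b"] by (simp add: add.commute)
    show ?thesis unfolding F1 F2 rows_below_trn cols_right_trn c1 c2 bin by simp
  qed
qed

lemma addable_trn:
  assumes P: "is_partition D"
  shows "addable (trn D) (c,r) \<longleftrightarrow> addable D (r,c)"
  unfolding addable_iff[OF P] addable_iff[OF part_trn[OF P]] by auto

lemma removable_trn:
  assumes P: "is_partition D"
  shows "removable (trn D) (b,a) \<longleftrightarrow> removable D (a,b)"
  unfolding removable_iff[OF P] removable_iff[OF part_trn[OF P]] by auto

lemma rng_neg: "k \<in> rng (-j) (-x) \<longleftrightarrow> -k \<in> rng j x"
  by (auto simp: rng_iff)

lemma bracket_trn:
  assumes P: "is_partition D"
  shows "bracket (trn D) (-j) (-x) = trn (bracket D j x)"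
proof (rule pair_set_eqI)
  fix u v
  have e: "int v - int u \<in> rng (-j) (-x) \<longleftrightarrow> int u - int v \<in> rng j x"
    unfolding rng_neg by simp
  show "(u,v) \<in> bracket (trn D) (-j) (-x) \<longleftrightarrow> (u,v) \<in> trn (bracket D j x)"
    unfolding mem_trn mem_bracket[OF P] mem_bracket[OF part_trn[OF P]] e by simp
qed

lemma Xset_trn_iff:
  assumes P: "is_partition D"
  shows "x \<in> Xset (trn D) (c,r) \<longleftrightarrow> -x \<in> Xset D (r,c)"
proof
  assume "x \<in> Xset (trn D) (c,r)"
  then obtain a b where h: "removable (trn D) (a,b)" "int b - int a = col (c,r) + x" "a + b + 1 = ht (c,r)"
    "\<forall>u v. (u,v) \<in> trn D \<longrightarrow> min (col (c,r)) (col (c,r) + x) < int v - int u \<and> int v - int u < max (col (c,r)) (col (c,r) + x) \<longrightarrow> u + v < ht (c,r)"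
    unfolding Xset_iff by blast
  have "removable D (b,a)" using h(1) removable_trn[OF P, of a b] by simp
  moreover have "int a - int b = col (r,c) + - x" using h(2) by simp
  moreover have "b + a + 1 = ht (r,c)" using h(3) by simp
  moreover have "\<forall>u v. (u,v) \<in> D \<longrightarrow> min (col (r,c)) (col (r,c) + - x) < int v - int u \<and> int v - int u < max (col (r,c)) (col (r,c) + - x) \<longrightarrow> u + v < ht (r,c)"
  proof (intro allI impI)
    fix u v assume uv: "(u,v) \<in> D" "min (col (r,c)) (col (r,c) + - x) < int v - int u \<and> int v - int u < max (col (r,c)) (col (r,c) + - x)"
    have "(v,u) \<in> trn D" using uv by simp
    moreover have "min (col (c,r)) (col (c,r) + x) < int u - int v \<and> int u - int v < max (col (c,r)) (col (c,r) + x)"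
      using uv(2) by (simp add: min_def max_def split: if_splits)
    ultimately have "v + u < ht (c,r)" using h(4) by blast
    then show "u + v < ht (r,c)" by simp
  qed
  ultimately show "-x \<in> Xset D (r,c)" unfolding Xset_iff by blast
next
  assume "-x \<in> Xset D (r,c)"
  then obtain a b where h: "removable D (a,b)" "int b - int a = col (r,c) + -x" "a + b + 1 = ht (r,c)"
    "\<forall>u v. (u,v) \<in> D \<longrightarrow> min (col (r,c)) (col (r,c) + -x) < int v - int u \<and> int v - int u < max (col (r,c)) (col (r,c) + -x) \<longrightarrow> u + v < ht (r,c)"
    unfolding Xset_iff by blast
  have "removable (trn D) (b,a)" using h(1) removable_trn[OF P, of b a] by simp
  moreover have "int a - int b = col (c,r) + x" using h(2) by simp
  moreover have "b + a + 1 = ht (c,r)" using h(3) by simp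
  moreover have "\<forall>u v. (u,v) \<in> trn D \<longrightarrow> min (col (c,r)) (col (c,r) + x) < int v - int u \<and> int v - int u < max (col (c,r)) (col (c,r) + x) \<longrightarrow> u + v < ht (c,r)"
  proof (intro allI impI)
    fix u v assume uv: "(u,v) \<in> trn D" "min (col (c,r)) (col (c,r) + x) < int v - int u \<and> int v - int u < max (col (c,r)) (col (c,r) + x)"
    have "(v,u) \<in> D" using uv by simp
    moreover have "min (col (r,c)) (col (r,c) + -x) < int u - int v \<and> int u - int v < max (col (r,c)) (col (r,c) + -x)"
      using uv(2) by (simp add: min_def max_def split: if_splits)
    ultimately have "v + u < ht (r,c)" using h(4) by blast
    then show "u + v < ht (c,r)" by simp
  qed
  ultimately show "x \<in> Xset (trn D) (c,r)" unfolding Xset_iff by blast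
qed

lemma Xset_trn:
  assumes P: "is_partition D"
  shows "Xset (trn D) (c,r) = uminus ` Xset D (r,c)"
proof -
  have "x \<in> Xset (trn D) (c,r) \<longleftrightarrow> x \<in> uminus ` Xset D (r,c)" for x
    unfolding Xset_trn_iff[OF P] by (auto simp: image_iff) (metis minus_minus)
  then show ?thesis by blast
qed


lemma sum_trn_gen:
  assumes P: "is_partition D" and A: "addable D (r,c)"
  shows "(\<Sum>x\<in>{x\<in>Xset (trn D) (c,r). Q x}. F (bracket (trn D) (col (c,r)) x))
       = (\<Sum>x\<in>{x\<in>Xset D (r,c). Q (-x)}. F (bracket D (col (r,c)) x))"
proof -
  have S: "{x\<in>Xset (trn D) (c,r). Q x} = uminus ` {x\<in>Xset D (r,c). Q (-x)}"
    unfolding Xset_trn[OF P] by (auto simp: image_iff)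
  have "(\<Sum>x\<in>{x\<in>Xset (trn D) (c,r). Q x}. F (bracket (trn D) (col (c,r)) x))
      = (\<Sum>x\<in>{x\<in>Xset D (r,c). Q (-x)}. F (bracket (trn D) (col (c,r)) (-x)))"
    unfolding S by (subst sum.reindex) (auto simp: inj_on_def)
  also have "\<dots> = (\<Sum>x\<in>{x\<in>Xset D (r,c). Q (-x)}. F (bracket D (col (r,c)) x))"
  proof (rule sum.cong[OF refl])
    fix x assume "x \<in> {x\<in>Xset D (r,c). Q (-x)}"
    then have X: "x \<in> Xset D (r,c)" by simp
    have "col (c,r) = - col (r,c)" by simp
    then have "bracket (trn D) (col (c,r)) (-x) = trn (bracket D (col (r,c)) x)"
      using bracket_trn[OF P, of "col (r,c)" x] by simp
    then show "F (bracket (trn D) (col (c,r)) (-x)) = F (bracket D (col (r,c)) x)"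
      using F_trn[OF bracket_part[OF P A X]] by simp
  qed
  finally show ?thesis .
qed

lemma sum_trn_all:
  assumes P: "is_partition D" and A: "addable D (r,c)"
  shows "(\<Sum>x\<in>Xset (trn D) (c,r). F (bracket (trn D) (col (c,r)) x))
       = (\<Sum>x\<in>Xset D (r,c). F (bracket D (col (r,c)) x))"
  using sum_trn_gen[OF P A, of "\<lambda>_. True"] by simp

definition NegSum :: "node set \<Rightarrow> node \<Rightarrow> nat" where
  "NegSum D l = (\<Sum>x\<in>{x\<in>Xset D l. x < 0}. F (bracket D (col l) x))"
definition PosSum :: "node set \<Rightarrow> node \<Rightarrow> nat" where
  "PosSum D l = (\<Sum>x\<in>{x\<in>Xset D l. 0 < x}. F (bracket D (col l) x))"

lemma PosSum_trn:
  assumes P: "is_partition D" and A: "addable D (r,c)"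
  shows "PosSum D (r,c) = NegSum (trn D) (c,r)"
  unfolding PosSum_def NegSum_def using sum_trn_gen[OF P A, of "\<lambda>x. x < 0"] by simp

lemma sum_split:
  assumes "finite D"
  shows "(\<Sum>x\<in>Xset D l. F (bracket D (col l) x)) = NegSum D l + PosSum D l"
proof -
  have fin: "finite (Xset D l)" using Xset_fin[OF assms] .
  have e: "Xset D l = {x\<in>Xset D l. x < 0} \<union> {x\<in>Xset D l. 0 < x}"
    using Xset_0[of D l] by (auto simp: neq_iff) (metis linorder_neqE_linordered_idom)
  show ?thesis unfolding NegSum_def PosSum_def
    by (subst e, rule sum.union_disjoint) (use fin in auto)
qed


lemma cols_right_0: "is_partition D \<Longrightarrow> cols_right D 0 = D"
  by (rule pair_set_eqI) (auto dest: part_pos)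

lemma L:
  assumes "is_partition \<mu>" and "2 \<le> c \<Longrightarrow> (1,c-1) \<in> \<mu>" and "\<forall>p\<in>\<mu>. ht p \<le> c" and "1 \<le> c"
  shows "(\<Sum>x\<in>Xset \<mu> (1,c). F (bracket \<mu> (col (1,c)) x)) = (c-1) * F (rows_below \<mu> 1)"
  using assms
proof (induction "card \<mu>" arbitrary: \<mu> c rule: less_induct)
  case less
  note P = less.prems(1) and R1 = less.prems(2) and H = less.prems(3) and c1 = less.prems(4)
  have fin: "finite \<mu>" using part_fin[OF P] .
  have Hl: "\<forall>p\<in>\<mu>. ht p < ht (1,c)"
  proof
    fix p assume "p \<in> \<mu>" then show "ht p < ht (1,c)" using bspec[OF H \<open>p \<in> \<mu>\<close>] by simp
  qed
  define M where "M = {n\<in>\<mu>. ht n + 1 = ht (1,c)}"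
  have XM: "Xset \<mu> (1,c) = (\<lambda>n. col n - col (1,c)) ` M"
    unfolding M_def by (rule Xset_top[OF P Hl])
  have Adl: "addable \<mu> (1,c)"
  proof -
    have "(1,c) \<notin> \<mu>" using Hl by auto
    then show ?thesis using addable_iff[OF P] c1 R1 by auto
  qed
  show ?case
  proof (cases "c = 1")
    case True
    have "\<mu> = {}"
    proof (rule ccontr)
      assume "\<mu> \<noteq> {}"
      then obtain p where p: "p \<in> \<mu>" by blast
      obtain u v where "p = (u,v)" by (cases p)
      then show False using part_pos[OF P, of u v] bspec[OF H p] True p by simp
    qed
    then show ?thesis using True by (simp add: Xset_def removable_def)
  next
    case False
    then have c2: "2 \<le> c" using c1 by simp
    have m1: "(1,c-1) \<in> M" unfolding M_def using R1[OF c2] c2 by simp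
    have finM: "finite M" unfolding M_def using fin by simp
    define a where "a = Max (fst ` M)"
    have aM: "a \<in> fst ` M" unfolding a_def using finM m1 by (intro Max_in) auto
    have ale: "fst n \<le> a" if "n \<in> M" for n unfolding a_def using finM that by (intro Max_ge) auto
    obtain b where tM: "(a,b) \<in> M" using aM by auto
    have tmu: "(a,b) \<in> \<mu>" and cab: "c = a + b" using tM unfolding M_def by auto
    have a1: "1 \<le> a" and b1: "1 \<le> b" using part_pos[OF P tmu] by auto
    have Mchar: "(u,v) \<in> M \<longleftrightarrow> (u,v) \<in> \<mu> \<and> u + v = c" for u v unfolding M_def by simp
    show ?thesis
    proof (cases "a = 1")
      case True
      have Mone: "M = {(1,c-1)}"
      proof (rule pair_set_eqI)
        fix u v
        show "(u,v) \<in> M \<longleftrightarrow> (u,v) \<in> {(1,c-1)}"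
        proof
          assume uv: "(u,v) \<in> M"
          then have "u \<le> 1" using ale[OF uv] True by simp
          moreover have "1 \<le> u" using part_pos[OF P, of u v] uv Mchar by simp
          ultimately show "(u,v) \<in> {(1,c-1)}" using uv Mchar by auto
        qed (use m1 in simp)
      qed
      have Xm: "Xset \<mu> (1,c) = {-1}" unfolding XM Mone using c2 by simp
      define \<mu>' where "\<mu>' = bracket \<mu> (col (1,c)) (-1)"
      have mem': "(u,v) \<in> \<mu>' \<longleftrightarrow> (u,v) \<in> \<mu> \<and> (u,v) \<noteq> (1,c-1)" for u v
      proof
        assume "(u,v) \<in> \<mu>'"
        then have h: "(u,v) \<in> \<mu>" "\<not> (int v - int u \<in> rng (int c - 1) (-1) \<and> (u+1,v+1) \<notin> \<mu>)"
          unfolding \<mu>'_def mem_bracket[OF P] by auto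
        have "(Suc (Suc 0),c) \<notin> \<mu>" using bspec[OF H, of "(Suc (Suc 0),c)"] by auto
        then show "(u,v) \<in> \<mu> \<and> (u,v) \<noteq> (1,c-1)" using h c2 by (auto simp: rng_iff)
      next
        assume h: "(u,v) \<in> \<mu> \<and> (u,v) \<noteq> (1,c-1)"
        have "u + v \<le> c" using bspec[OF H, of "(u,v)"] h by simp
        moreover have "1 \<le> u" using part_pos[OF P, of u v] h by simp
        ultimately have "\<not> (int v - int u \<in> rng (int c - 1) (-1))" using h c2 by (auto simp: rng_iff)
        then show "(u,v) \<in> \<mu>'" unfolding \<mu>'_def mem_bracket[OF P] using h by simp
      qed
      have Xm1: "-1 \<in> Xset \<mu> (1,c)" using Xm by simp
      have P': "is_partition \<mu>'" unfolding \<mu>'_def by (rule bracket_part[OF P Adl Xm1])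
      have R1': "(1,c-2) \<in> \<mu>'" if "1 \<le> c - 2"
        using mem' part_down[OF P R1[OF c2], of 1 "c-2"] that by simp
      have H': "\<forall>p\<in>\<mu>'. ht p \<le> (c-2)+1"
      proof
        fix p assume pm: "p \<in> \<mu>'"
        obtain u v where p: "p = (u,v)" by (cases p)
        have "u + v \<le> c" using bspec[OF H, of p] pm p mem' by simp
        moreover have "u + v \<noteq> c" using Mone Mchar[of u v] pm p mem' by auto
        ultimately show "ht p \<le> (c-2)+1" using p c2 by simp
      qed
      have F': "F \<mu>' = (c-2+1) * F (rows_below \<mu>' 1)" by (rule row1[OF P' R1' H'])
      have rb: "rows_below \<mu>' 1 = rows_below \<mu> 1" by (rule pair_set_eqI) (auto simp: mem')
      have ce: "c - 2 + 1 = c - 1" using c2 by simp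
      have "(\<Sum>x\<in>Xset \<mu> (1,c). F (bracket \<mu> (col (1,c)) x)) = F \<mu>'" unfolding Xm \<mu>'_def by simp
      also have "\<dots> = (c-1) * F (rows_below \<mu> 1)" unfolding F' rb ce ..
      finally show ?thesis .
    next
      case False
      then have a2: "2 \<le> a" using a1 by simp
      define \<rho> where "\<rho> = cols_right \<mu> b"
      have P\<rho>: "is_partition \<rho>" unfolding \<rho>_def by (rule part_cols_right[OF P])
      have R1\<rho>: "(1,a-1) \<in> \<rho>" if "2 \<le> a" using R1[OF c2] cab that unfolding \<rho>_def by simp
      have H\<rho>: "\<forall>p\<in>\<rho>. ht p \<le> a"
      proof
        fix p assume pm: "p \<in> \<rho>"
        obtain u v where p: "p = (u,v)" by (cases p)
        have "(u,v+b) \<in> \<mu>" using pm p unfolding \<rho>_def by simp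
        then show "ht p \<le> a" using bspec[OF H, of "(u,v+b)"] p cab by simp
      qed
      have card\<rho>: "card \<rho> < card \<mu>" unfolding \<rho>_def by (rule card_cols_right_less[OF fin tmu])
      have IH: "(\<Sum>x\<in>Xset \<rho> (1,a). F (bracket \<rho> (col (1,a)) x)) = (a-1) * F (rows_below \<rho> 1)"
        by (rule less.hyps[OF card\<rho> P\<rho> R1\<rho> H\<rho> a1])
      have Hl\<rho>: "\<forall>p\<in>\<rho>. ht p < ht (1,a)"
      proof
        fix p assume "p \<in> \<rho>" then show "ht p < ht (1,a)" using bspec[OF H\<rho> \<open>p \<in> \<rho>\<close>] by simp
      qed
      define M' where "M' = {n\<in>\<rho>. ht n + 1 = ht (1,a)}"
      have XM': "Xset \<rho> (1,a) = (\<lambda>n. col n - col (1,a)) ` M'"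
        unfolding M'_def by (rule Xset_top[OF P\<rho> Hl\<rho>])
      have M'char: "(u,v) \<in> M' \<longleftrightarrow> 0 < v \<and> (u,v+b) \<in> \<mu> \<and> u + v = a" for u v
        unfolding M'_def \<rho>_def by simp
      define xt where "xt = col (a,b) - col (1,c)"
      have XS: "Xset \<mu> (1,c) = insert xt (Xset \<rho> (1,a))"
      proof
        show "Xset \<mu> (1,c) \<subseteq> insert xt (Xset \<rho> (1,a))"
        proof
          fix x assume "x \<in> Xset \<mu> (1,c)"
          then obtain u v where uv: "(u,v) \<in> M" "x = col (u,v) - col (1,c)" unfolding XM by auto
          show "x \<in> insert xt (Xset \<rho> (1,a))"
          proof (cases "u = a")
            case True
            then have "v = b" using uv(1) Mchar cab by simp
            then show ?thesis using uv True xt_def by simp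
          next
            case False
            then have "u < a" using ale[OF uv(1)] by simp
            then have vb: "b < v" using uv(1) Mchar cab by simp
            have "(u, v - b) \<in> M'" using M'char[of u "v-b"] uv(1) Mchar vb cab \<open>u < a\<close> by simp
            moreover have "x = col (u, v-b) - col (1,a)" using uv(2) vb cab by simp
            ultimately show ?thesis unfolding XM' by blast
          qed
        qed
        show "insert xt (Xset \<rho> (1,a)) \<subseteq> Xset \<mu> (1,c)"
        proof
          fix x assume "x \<in> insert xt (Xset \<rho> (1,a))"
          then show "x \<in> Xset \<mu> (1,c)"
          proof
            assume "x = xt" then show ?thesis unfolding XM xt_def using tM by blast
          next
            assume "x \<in> Xset \<rho> (1,a)"
            then obtain u v where uv: "(u,v) \<in> M'" "x = col (u,v) - col (1,a)" unfolding XM' by auto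
            have "(u,v+b) \<in> M" using uv(1) M'char Mchar cab by simp
            moreover have "x = col (u,v+b) - col (1,c)" using uv(2) cab by simp
            ultimately show ?thesis unfolding XM by blast
          qed
        qed
      qed
      have xtn: "xt \<notin> Xset \<rho> (1,a)"
      proof
        assume "xt \<in> Xset \<rho> (1,a)"
        then obtain u v where uv: "(u,v) \<in> M'" "xt = col (u,v) - col (1,a)" unfolding XM' by auto
        then show False using M'char xt_def cab by simp
      qed
      have finX\<rho>: "finite (Xset \<rho> (1,a))" by (rule Xset_fin[OF part_fin[OF P\<rho>]])
      have cola: "col (1,c) - int b = col (1,a)" using cab by simp
      have Ba: "bracket (rows_below \<mu> a) (col (1,c) + int a) y = rows_below \<mu> a"
        if "\<forall>k\<in>rng (col (1,c) + int a) y. int b \<le> k" for y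
      proof (rule bracket_id[OF part_rows_below[OF P]])
        fix u v assume uv: "(u,v) \<in> rows_below \<mu> a"
        then have "u + a + v \<le> c" "0 < u" using bspec[OF H, of "(u+a,v)"] by auto
        then have "int v - int u < int b" using cab by simp
        then show "int v - int u \<notin> rng (col (1,c) + int a) y" using that by force
      qed
      have term1: "F (bracket \<mu> (col (1,c)) x) = ((a+b) choose a) * F (rows_below \<mu> a) * F (bracket \<rho> (col (1,a)) x)"
        if xX: "x \<in> Xset \<rho> (1,a)" for x
      proof -
        obtain u v where uv: "(u,v) \<in> M'" "x = col (u,v) - col (1,a)" using xX unfolding XM' by auto
        have uvp: "0 < v" "u + v = a" "1 \<le> u" using uv(1) M'char part_pos[OF P, of u "v+b"] by auto
        have xr: "x \<le> -1" "3 - 2 * int a \<le> x" using uv(2) uvp by auto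
        have xm: "x \<in> Xset \<mu> (1,c)" using XS xX by simp
        define E where "E = bracket \<mu> (col (1,c)) x"
        have PE: "is_partition E" unfolding E_def by (rule bracket_part[OF P Adl xm])
        have tE: "(a,b) \<in> E" unfolding E_def mem_bracket[OF P] using tmu xr cab by (auto simp: rng_iff)
        have HE: "\<forall>p\<in>E. ht p \<le> a+b" using H bracket_sub[of \<mu> "col (1,c)" x] cab unfolding E_def by auto
        have "F E = ((a+b) choose a) * F (rows_below E a) * F (cols_right E b)" by (rule F_at[OF PE tE HE])
        moreover have "rows_below E a = rows_below \<mu> a"
          unfolding E_def bracket_rows_below[OF P] using xr cab by (intro Ba) (auto simp: rng_iff)
        moreover have "cols_right E b = bracket \<rho> (col (1,a)) x"
          unfolding E_def bracket_cols_right[OF P] cola \<rho>_def ..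
        ultimately show ?thesis unfolding E_def by simp
      qed
      have sum1: "(\<Sum>x\<in>Xset \<rho> (1,a). F (bracket \<mu> (col (1,c)) x)) = ((a+b) choose a) * F (rows_below \<mu> a) * ((a-1) * F (rows_below \<rho> 1))"
      proof -
        have "(\<Sum>x\<in>Xset \<rho> (1,a). F (bracket \<mu> (col (1,c)) x)) = (\<Sum>x\<in>Xset \<rho> (1,a). ((a+b) choose a) * F (rows_below \<mu> a) * F (bracket \<rho> (col (1,a)) x))"
          by (rule sum.cong[OF refl]) (rule term1)
        also have "\<dots> = ((a+b) choose a) * F (rows_below \<mu> a) * (\<Sum>x\<in>Xset \<rho> (1,a). F (bracket \<rho> (col (1,a)) x))"
          by (simp add: sum_distrib_left)
        finally show ?thesis unfolding IH .
      qed
      have xtv: "xt = 1 - 2 * int a" unfolding xt_def using cab by simp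
      define Et where "Et = bracket \<mu> (col (1,c)) xt"
      have memEt: "(u,v) \<in> Et \<longleftrightarrow> (u,v) \<in> \<mu> \<and> \<not> (int b - int a \<le> int v - int u \<and> int v - int u \<le> int c - 2 \<and> (u+1,v+1) \<notin> \<mu>)" for u v
        unfolding Et_def mem_bracket[OF P] xtv rng_iff using a1 cab by auto
      have xtm: "xt \<in> Xset \<mu> (1,c)" using XS by simp
      have PEt: "is_partition Et" unfolding Et_def by (rule bracket_part[OF P Adl xtm])
      have BaEt: "rows_below Et a = rows_below \<mu> a"
        unfolding Et_def bracket_rows_below[OF P] using cab xtv by (intro Ba) (auto simp: rng_iff)
      have REt: "cols_right Et (b-1) = rows_below \<rho> 1"
      proof (rule pair_set_eqI)
        fix u v
        show "(u,v) \<in> cols_right Et (b-1) \<longleftrightarrow> (u,v) \<in> rows_below \<rho> 1"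
        proof
          assume h: "(u,v) \<in> cols_right Et (b-1)"
          then have h1: "0 < v" "(u, v+(b-1)) \<in> Et" by auto
          then have h2: "(u,v+(b-1)) \<in> \<mu>" using memEt by blast
          have u1: "1 \<le> u" using part_pos[OF P h2] by simp
          have "u + (v + (b-1)) \<le> c" using bspec[OF H h2] by simp
          then have uva: "u + v \<le> a + 1" using b1 cab by arith
          have ib: "int (v+(b-1)) = int v + int b - 1" using b1 by simp
          have "int b - int a \<le> int (v+(b-1)) - int u \<and> int (v+(b-1)) - int u \<le> int c - 2"
            unfolding ib using uva u1 h1 cab by simp
          then have "(u+1,v+(b-1)+1) \<in> \<mu>" using h1(2) memEt by blast
          then show "(u,v) \<in> rows_below \<rho> 1" unfolding \<rho>_def using h1 u1 b1 by (simp add: add_ac)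
        next
          assume h: "(u,v) \<in> rows_below \<rho> 1"
          then have h1: "0 < u" "0 < v" "(u+1,v+b) \<in> \<mu>" unfolding \<rho>_def by auto
          have "(u,v+(b-1)) \<in> \<mu>" using part_down[OF P h1(3), of u "v+(b-1)"] h1 by simp
          moreover have "(u+1,v+(b-1)+1) \<in> \<mu>" using h1 b1 by simp
          ultimately have "(u,v+(b-1)) \<in> Et" using memEt by blast
          then show "(u,v) \<in> cols_right Et (b-1)" using h1 by simp
        qed
      qed
      have FEt: "F Et = ((c-1) choose a) * F (rows_below \<mu> a) * F (rows_below \<rho> 1)"
      proof (cases "b = 1")
        case True
        have "Et = rows_below \<rho> 1" using REt True cols_right_0[OF PEt] by simp
        moreover have "rows_below \<mu> a = {}"
        proof (rule ccontr)
          assume "rows_below \<mu> a \<noteq> {}"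
          then obtain p where p: "p \<in> rows_below \<mu> a" by blast
          obtain u v where "p = (u,v)" by (cases p)
          then have "0 < u" "(u+a,v) \<in> \<mu>" using p by auto
          then show False using bspec[OF H \<open>(u+a,v) \<in> \<mu>\<close>] part_pos[OF P \<open>(u+a,v) \<in> \<mu>\<close>] cab True by simp
        qed
        ultimately show ?thesis using cab True by simp
      next
        case False
        then have b2: "2 \<le> b" using b1 by simp
        have sE: "(a,b-1) \<in> Et"
          using memEt part_down[OF P tmu, of a "b-1"] a1 b2 by simp
        have HEt: "\<forall>p\<in>Et. ht p \<le> a + (b-1)"
        proof
          fix p assume pE: "p \<in> Et"
          obtain u v where p: "p = (u,v)" by (cases p)
          have um: "(u,v) \<in> \<mu>" using pE p memEt by blast
          have le: "u + v \<le> c" using bspec[OF H um] by simp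
          have "u + v \<noteq> c"
          proof
            assume e: "u + v = c"
            then have "(u,v) \<in> M" using Mchar um by simp
            then have "u \<le> a" using ale by fastforce
            moreover have "1 \<le> u" using part_pos[OF P um] by simp
            moreover have "(u+1,v+1) \<notin> \<mu>" using bspec[OF H, of "(u+1,v+1)"] e by auto
            ultimately have "(u,v) \<notin> Et" using memEt e cab by simp
            then show False using pE p by simp
          qed
          then show "ht p \<le> a + (b-1)" using le p cab b2 by simp
        qed
        have "F Et = ((a + (b-1)) choose a) * F (rows_below Et a) * F (cols_right Et (b-1))"
          by (rule F_at[OF PEt sE HEt])
        then show ?thesis using BaEt REt cab b2 by simp
      qed
      have Fmu1: "F \<mu> = (c-1+1) * F (rows_below \<mu> 1)"
        by (rule row1[OF P]) (use R1 c2 H c1 in auto)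
      have HHt: "\<forall>p\<in>\<mu>. ht p \<le> a+b" using H cab by simp
      have Fmu2: "F \<mu> = ((a+b) choose a) * F (rows_below \<mu> a) * F \<rho>"
        unfolding \<rho>_def by (rule F_at[OF P tmu HHt])
      have Frho: "F \<rho> = (a-1+1) * F (rows_below \<rho> 1)"
        by (rule row1[OF P\<rho>]) (use R1\<rho> a2 H\<rho> a1 in auto)
      have Sum: "(\<Sum>x\<in>Xset \<mu> (1,c). F (bracket \<mu> (col (1,c)) x))
          = ((c-1) choose a) * F (rows_below \<mu> a) * F (rows_below \<rho> 1) + ((a+b) choose a) * F (rows_below \<mu> a) * ((a-1) * F (rows_below \<rho> 1))"
        unfolding XS sum.insert[OF finX\<rho> xtn] using sum1 FEt Et_def by simp
      define K where "K = (a+b) choose a"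
      define K1 where "K1 = (c-1) choose a"
      define Y where "Y = F (rows_below \<mu> a) * F (rows_below \<rho> 1)"
      have absorb: "c * K1 = b * K"
        using binomial_absorb_comp[of c a] cab unfolding K_def K1_def by simp
      have e1: "c * F (rows_below \<mu> 1) = K * a * Y"
        using Fmu1 Fmu2 Frho a1 c1 unfolding K_def Y_def by (simp add: mult_ac)
      have Sum': "(\<Sum>x\<in>Xset \<mu> (1,c). F (bracket \<mu> (col (1,c)) x)) = K1 * Y + K * (a-1) * Y"
        unfolding Sum K_def K1_def Y_def by (simp add: mult_ac)
      obtain a' where a': "a = Suc a'" using a1 by (cases a) auto
      have ar: "b + c * (a-1) = a * (c-1)" using cab a' by (simp add: algebra_simps)
      have "c * (K1 * Y + K * (a-1) * Y) = (b + c * (a-1)) * K * Y"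
        using absorb by (simp add: algebra_simps)
      also have "\<dots> = (c-1) * (K * a * Y)" unfolding ar by (simp add: mult_ac)
      also have "\<dots> = c * ((c-1) * F (rows_below \<mu> 1))" unfolding e1[symmetric] by (simp add: mult_ac)
      finally have "K1 * Y + K * (a-1) * Y = (c-1) * F (rows_below \<mu> 1)" using c1 by simp
      then show ?thesis unfolding Sum' .
    qed
  qed
qed


lemma img_pair_obtain:
  assumes "x \<in> (\<lambda>n. f n) ` {n\<in>D. P n}"
  obtains u v where "(u,v) \<in> D" "P (u,v)" "x = f (u,v)"
  using assms by auto

lemma cols_right_empty:
  assumes P: "is_partition D" and H: "\<forall>p\<in>D. ht p \<le> c"
  shows "cols_right D c = {}"
proof (rule ccontr)
  assume "cols_right D c \<noteq> {}"
  then obtain p where p: "p \<in> cols_right D c" by blast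
  obtain u v where "p = (u,v)" by (cases p)
  then have "0 < v" "(u,v+c) \<in> D" using p by auto
  then show False using bspec[OF H \<open>(u,v+c) \<in> D\<close>] part_pos[OF P \<open>(u,v+c) \<in> D\<close>] by simp
qed

lemma FDA:
  assumes P: "is_partition D" and A: "addable D (r,c)" and H: "\<forall>p\<in>D. ht p < r + c"
  shows "F D = c * ((r+c-1) choose (r-1)) * F (rows_below D r) * F (cols_right D c)"
    and "F (insert (r,c) D) = ((r+c) choose r) * F (rows_below D r) * F (cols_right D c)"
proof -
  have a: "(r,c) \<notin> D" "1 \<le> r" "1 \<le> c" "1 < r \<longrightarrow> (r-1,c) \<in> D" "1 < c \<longrightarrow> (r,c-1) \<in> D"
    using A addable_iff[OF P] by auto
  have PI: "is_partition (insert (r,c) D)" using A unfolding addable_def by simp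
  have HI: "\<forall>p\<in>insert (r,c) D. ht p \<le> r + c" using H by auto
  have "F (insert (r,c) D) = ((r+c) choose r) * F (rows_below (insert (r,c) D) r) * F (cols_right (insert (r,c) D) c)"
    by (rule F_at[OF PI _ HI]) simp
  moreover have "rows_below (insert (r,c) D) r = rows_below D r" by (rule pair_set_eqI) auto
  moreover have "cols_right (insert (r,c) D) c = cols_right D c" by (rule pair_set_eqI) auto
  ultimately show "F (insert (r,c) D) = ((r+c) choose r) * F (rows_below D r) * F (cols_right D c)" by simp
  show "F D = c * ((r+c-1) choose (r-1)) * F (rows_below D r) * F (cols_right D c)"
  proof (cases "r = 1")
    case True
    have "F D = (c-1+1) * F (rows_below D 1)"
      by (rule row1[OF P]) (use a H True in auto)
    moreover have "cols_right D c = {}" by (rule cols_right_empty[OF P]) (use H True in auto)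
    ultimately show ?thesis using True a by simp
  next
    case False
    then have r2: "2 \<le> r" using a by simp
    have s: "(r-1,c) \<in> D" using a r2 by simp
    have Hs: "\<forall>p\<in>D. ht p \<le> (r-1) + c"
    proof
      fix p assume "p \<in> D" then show "ht p \<le> (r-1)+c" using bspec[OF H \<open>p \<in> D\<close>] r2 by simp
    qed
    have F1: "F D = ((r-1+c) choose (r-1)) * F (rows_below D (r-1)) * F (cols_right D c)"
      by (rule F_at[OF P s Hs])
    have HB: "\<forall>p\<in>rows_below D (r-1). ht p \<le> (c-1)+1"
    proof
      fix p assume pm: "p \<in> rows_below D (r-1)"
      obtain u v where p: "p = (u,v)" by (cases p)
      have "(u+(r-1),v) \<in> D" using pm p by simp
      then show "ht p \<le> (c-1)+1" using bspec[OF H, of "(u+(r-1),v)"] p a r2 by simp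
    qed
    have R1B: "(1, c-1) \<in> rows_below D (r-1)" if "1 \<le> c-1" using a that r2 by simp
    have F2: "F (rows_below D (r-1)) = (c-1+1) * F (rows_below (rows_below D (r-1)) 1)"
      by (rule row1[OF part_rows_below[OF P] R1B HB])
    have e: "rows_below (rows_below D (r-1)) 1 = rows_below D r" using rows_below_rows_below[of D "r-1" 1] r2 by simp
    show ?thesis unfolding F1 F2 e using a r2 by (simp add: mult_ac)
  qed
qed

lemma NegA:
  assumes P: "is_partition D" and A: "addable D (r,c)" and H: "\<forall>p\<in>D. ht p < r + c"
  shows "NegSum D (r,c) = (c-1) * ((r+c-1) choose (r-1)) * F (rows_below D r) * F (cols_right D c)"
proof -
  have a: "(r,c) \<notin> D" "1 \<le> r" "1 \<le> c" "1 < r \<longrightarrow> (r-1,c) \<in> D" "1 < c \<longrightarrow> (r,c-1) \<in> D"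
    using A addable_iff[OF P] by auto
  have Hl: "\<forall>p\<in>D. ht p < ht (r,c)" using H by simp
  have XD: "Xset D (r,c) = (\<lambda>n. col n - col (r,c)) ` {n\<in>D. ht n + 1 = ht (r,c)}"
    by (rule Xset_top[OF P Hl])
  show ?thesis
  proof (cases "r = 1")
    case True
    have neg: "{x\<in>Xset D (r,c). x < 0} = Xset D (r,c)"
    proof -
      have "x < 0" if xin: "x \<in> Xset D (r,c)" for x
      proof -
        obtain u v where uv: "(u,v) \<in> D" "ht (u,v) + 1 = ht (r,c)" "x = col (u,v) - col (r,c)"
          using xin unfolding XD by (rule img_pair_obtain)
        then show ?thesis using part_pos[OF P uv(1)] True by simp
      qed
      then show ?thesis by blast
    qed
    have HL: "\<forall>p\<in>D. ht p \<le> c"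
    proof
      fix p assume "p \<in> D" then show "ht p \<le> c" using bspec[OF H \<open>p \<in> D\<close>] True by simp
    qed
    have "NegSum D (r,c) = (c-1) * F (rows_below D 1)"
      unfolding NegSum_def neg using L[OF P _ HL a(3)] a True by simp
    moreover have "cols_right D c = {}" by (rule cols_right_empty[OF P HL])
    ultimately show ?thesis using True by simp
  next
    case False
    then have r2: "2 \<le> r" using a by simp
    define B where "B = rows_below D (r-1)"
    have PB: "is_partition B" unfolding B_def by (rule part_rows_below[OF P])
    have HB: "\<forall>p\<in>B. ht p \<le> c"
    proof
      fix p assume pm: "p \<in> B"
      obtain u v where p: "p = (u,v)" by (cases p)
      have "(u+(r-1),v) \<in> D" using pm p B_def by simp
      then show "ht p \<le> c" using bspec[OF H, of "(u+(r-1),v)"] p a r2 by simp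
    qed
    have HlB: "\<forall>p\<in>B. ht p < ht (1,c)"
    proof
      fix p assume "p \<in> B" then show "ht p < ht (1,c)" using bspec[OF HB \<open>p \<in> B\<close>] by simp
    qed
    have XB: "Xset B (1,c) = (\<lambda>n. col n - col (1,c)) ` {n\<in>B. ht n + 1 = ht (1,c)}"
      by (rule Xset_top[OF PB HlB])
    have neg: "{x\<in>Xset D (r,c). x < 0} = Xset B (1,c)"
    proof
      show "{x\<in>Xset D (r,c). x < 0} \<subseteq> Xset B (1,c)"
      proof
        fix x assume "x \<in> {x\<in>Xset D (r,c). x < 0}"
        then have xx: "x \<in> Xset D (r,c)" "x < 0" by auto
        obtain u v where uv0: "(u,v) \<in> D" "ht (u,v) + 1 = ht (r,c)" "x = col (u,v) - col (r,c)"
          using xx(1) unfolding XD by (rule img_pair_obtain)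
        have uv: "(u,v) \<in> D" "u + v + 1 = r + c" "x = col (u,v) - col (r,c)" "x < 0" using uv0 xx by auto
        then have ur: "r \<le> u" by simp
        have "(u - (r-1), v) \<in> {n\<in>B. ht n + 1 = ht (1,c)}" using uv ur r2 B_def by simp
        moreover have "x = col (u - (r-1), v) - col (1,c)" using uv ur r2 by simp
        ultimately show "x \<in> Xset B (1,c)" unfolding XB by blast
      qed
      show "Xset B (1,c) \<subseteq> {x\<in>Xset D (r,c). x < 0}"
      proof
        fix x assume "x \<in> Xset B (1,c)"
        then obtain u v where uv0: "(u,v) \<in> B" "ht (u,v) + 1 = ht (1,c)" "x = col (u,v) - col (1,c)"
          unfolding XB by (rule img_pair_obtain)
        have uv: "(u,v) \<in> B" "u + v + 1 = 1 + c" "x = col (u,v) - col (1,c)" using uv0 by auto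
        have u1: "0 < u" "(u + (r-1), v) \<in> D" using uv B_def by auto
        have "(u + (r-1), v) \<in> {n\<in>D. ht n + 1 = ht (r,c)}" using u1 uv r2 by simp
        moreover have "x = col (u + (r-1), v) - col (r,c)" using uv r2 by simp
        ultimately have "x \<in> Xset D (r,c)" unfolding XD by blast
        moreover have "x < 0" using uv u1 by simp
        ultimately show "x \<in> {x\<in>Xset D (r,c). x < 0}" by simp
      qed
    qed
    have termx: "F (bracket D (col (r,c)) x) = ((r-1+c) choose (r-1)) * F (bracket B (col (1,c)) x) * F (cols_right D c)"
      if xB: "x \<in> Xset B (1,c)" for x
    proof -
      have xD: "x \<in> Xset D (r,c)" and xn: "x < 0" using xB neg by auto
      define E where "E = bracket D (col (r,c)) x"
      have PE: "is_partition E" unfolding E_def by (rule bracket_part[OF P A xD])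
      have sE: "(r-1,c) \<in> E" unfolding E_def mem_bracket[OF P] using a r2 xn by (auto simp: rng_iff)
      have HE: "\<forall>p\<in>E. ht p \<le> (r-1)+c"
      proof
        fix p assume "p \<in> E"
        then have "p \<in> D" using bracket_sub unfolding E_def by blast
        then show "ht p \<le> (r-1)+c" using bspec[OF H \<open>p \<in> D\<close>] r2 by simp
      qed
      have "F E = ((r-1+c) choose (r-1)) * F (rows_below E (r-1)) * F (cols_right E c)"
        by (rule F_at[OF PE sE HE])
      moreover have "rows_below E (r-1) = bracket B (col (1,c)) x"
        unfolding E_def bracket_rows_below[OF P] B_def using r2 by simp
      moreover have "cols_right E c = cols_right D c"
        unfolding E_def bracket_cols_right[OF P]
      proof (rule bracket_id[OF part_cols_right[OF P]])
        fix u v assume uv: "(u,v) \<in> cols_right D c"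
        then have h: "0 < v" "(u, v+c) \<in> D" by auto
        have "u < r"
        proof (rule ccontr)
          assume "\<not> u < r"
          then have "(r,c) \<in> D" using part_down[OF P h(2), of r c] a by simp
          then show False using a by simp
        qed
        then show "int v - int u \<notin> rng (col (r,c) - int c) x" using xn h by (auto simp: rng_iff)
      qed
      ultimately show ?thesis unfolding E_def by simp
    qed
    have R1B: "(1,c-1) \<in> B" if "2 \<le> c" using a that r2 B_def by simp
    have LB: "(\<Sum>x\<in>Xset B (1,c). F (bracket B (col (1,c)) x)) = (c-1) * F (rows_below B 1)"
      by (rule L[OF PB R1B HB a(3)])
    have e: "rows_below B 1 = rows_below D r" using rows_below_rows_below[of D "r-1" 1] r2 B_def by simp
    have "NegSum D (r,c) = (\<Sum>x\<in>Xset B (1,c). ((r-1+c) choose (r-1)) * F (bracket B (col (1,c)) x) * F (cols_right D c))"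
      unfolding NegSum_def neg by (rule sum.cong[OF refl]) (rule termx)
    also have "\<dots> = ((r-1+c) choose (r-1)) * F (cols_right D c) * (\<Sum>x\<in>Xset B (1,c). F (bracket B (col (1,c)) x))"
      by (simp add: sum_distrib_left sum_distrib_right mult_ac)
    also have "\<dots> = (c-1) * ((r+c-1) choose (r-1)) * F (rows_below D r) * F (cols_right D c)"
      unfolding LB e using r2 by (simp add: mult_ac)
    finally show ?thesis .
  qed
qed

lemma binom_id:
  assumes "1 \<le> r" "1 \<le> c"
  shows "((r+c) choose r) + (c-1) * ((r+c-1) choose (r-1)) + (r-1) * ((c+r-1) choose (c-1)) = 2 * c * ((r+c-1) choose (r-1))"
proof -
  obtain r' where r: "r = Suc r'" using assms by (cases r) auto
  obtain c' where c: "c = Suc c'" using assms by (cases c) auto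
  define A where "A = Suc (r'+c') choose r'"
  define B where "B = Suc (r'+c') choose Suc r'"
  have s: "Suc (c'+r') choose c' = B"
  proof -
    have "Suc (r'+c') choose c' = Suc (r'+c') choose (Suc (r'+c') - c')"
      by (rule binomial_symmetric) simp
    then show ?thesis unfolding B_def by (simp add: add.commute Suc_diff_le)
  qed
  have p: "Suc r' * B = Suc c' * A" unfolding A_def B_def by (rule Suc_times_binomial_add)
  have q: "(Suc r' + Suc c') choose Suc r' = A + B" unfolding A_def B_def by simp
  have g: "(A+B) + c'*A + r'*B = 2 * Suc c' * A" using p by (simp add: algebra_simps)
  have e2: "Suc r' + Suc c' - 1 = Suc (r'+c')" "Suc c' + Suc r' - 1 = Suc (c'+r')" "Suc c' - 1 = c'" "Suc r' - 1 = r'" by simp_all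
  have e3: "Suc (r'+c') choose r' = A" unfolding A_def ..
  show ?thesis unfolding r c q e2 e3 s using g by simp
qed

lemma caseA:
  assumes P: "is_partition D" and A: "addable D (r,c)" and H: "\<forall>p\<in>D. ht p < r + c"
  shows "F (insert (r,c) D) + (\<Sum>x\<in>Xset D (r,c). F (bracket D (col (r,c)) x)) = 2 * F D"
proof -
  have a: "1 \<le> r" "1 \<le> c" using A addable_iff[OF P] by auto
  have PT: "is_partition (trn D)" by (rule part_trn[OF P])
  have AT: "addable (trn D) (c,r)" using addable_trn[OF P] A by simp
  have HT: "\<forall>p\<in>trn D. ht p < c + r"
  proof
    fix p assume pm: "p \<in> trn D"
    obtain u v where p: "p = (u,v)" by (cases p)
    have "(v,u) \<in> D" using pm p by simp
    then show "ht p < c + r" using bspec[OF H \<open>(v,u) \<in> D\<close>] p by simp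
  qed
  have pos: "PosSum D (r,c) = (r-1) * ((c+r-1) choose (c-1)) * F (rows_below D r) * F (cols_right D c)"
  proof -
    have "PosSum D (r,c) = NegSum (trn D) (c,r)" by (rule PosSum_trn[OF P A])
    also have "\<dots> = (r-1) * ((c+r-1) choose (c-1)) * F (rows_below (trn D) c) * F (cols_right (trn D) r)"
      by (rule NegA[OF PT AT HT])
    also have "\<dots> = (r-1) * ((c+r-1) choose (c-1)) * F (rows_below D r) * F (cols_right D c)"
      unfolding rows_below_trn cols_right_trn F_trn[OF part_cols_right[OF P]] F_trn[OF part_rows_below[OF P]]
      by (simp add: mult_ac)
    finally show ?thesis .
  qed
  have neg: "NegSum D (r,c) = (c-1) * ((r+c-1) choose (r-1)) * F (rows_below D r) * F (cols_right D c)"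
    by (rule NegA[OF P A H])
  define Y where "Y = F (rows_below D r) * F (cols_right D c)"
  have "F (insert (r,c) D) + (\<Sum>x\<in>Xset D (r,c). F (bracket D (col (r,c)) x))
      = (((r+c) choose r) + (c-1) * ((r+c-1) choose (r-1)) + (r-1) * ((c+r-1) choose (c-1))) * Y"
    unfolding sum_split[OF part_fin[OF P]] pos neg FDA(2)[OF P A H] Y_def by (simp add: algebra_simps)
  also have "\<dots> = 2 * (c * ((r+c-1) choose (r-1)) * Y)" unfolding binom_id[OF a] by (simp add: mult_ac)
  also have "\<dots> = 2 * F D" unfolding FDA(1)[OF P A H] Y_def by (simp add: mult_ac)
  finally show ?thesis .
qed


lemma Xset_below:
  assumes P: "is_partition D" and A: "addable D (r,c)" and t: "(a,b) \<in> D"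
    and Ht: "\<forall>p\<in>D. ht p \<le> a+b" and hl: "r + c \<le> a + b" and ra: "a < r" and cb: "c \<le> b"
  shows "Xset D (r,c) = Xset (rows_below D a) (r-a,c)"
proof -
  have PB: "is_partition (rows_below D a)" by (rule part_rows_below[OF P])
  have a1: "1 \<le> a" using part_pos[OF P t] by simp
  show ?thesis
  proof (rule set_eqI)
    fix x
    show "x \<in> Xset D (r,c) \<longleftrightarrow> x \<in> Xset (rows_below D a) (r-a,c)"
    proof
      assume "x \<in> Xset D (r,c)"
      then obtain u v where w: "removable D (u,v)" "int v - int u = col (r,c) + x" "u + v + 1 = ht (r,c)"
        and bt: "\<forall>u' v'. (u',v') \<in> D \<longrightarrow> min (col (r,c)) (col (r,c) + x) < int v' - int u' \<and> int v' - int u' < max (col (r,c)) (col (r,c) + x) \<longrightarrow> u' + v' < ht (r,c)"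
        unfolding Xset_iff by blast
      have rm: "(u,v) \<in> D" "(u+1,v) \<notin> D" "(u,v+1) \<notin> D" using w(1) removable_iff[OF P] by auto
      have pu: "1 \<le> u" "1 \<le> v" using part_pos[OF P rm(1)] by auto
      have ua: "a < u"
      proof (rule ccontr)
        assume "\<not> a < u"
        then have ua: "u \<le> a" by simp
        show False
        proof (cases "v \<le> b")
          case True
          show False
          proof (cases "u < a")
            case True
            then have "(u+1,v) \<in> D" using part_down[OF P t, of "u+1" v] \<open>v \<le> b\<close> pu by simp
            then show False using rm by simp
          next
            case False
            then have "u = a" using ua by simp
            then have "v < b" using w(3) hl by simp
            then have "(u,v+1) \<in> D" using part_down[OF P t, of u "v+1"] \<open>u = a\<close> pu by simp
            then show False using rm by simp
          qed
        next
          case False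
          have "min (col (r,c)) (col (r,c) + x) < int b - int a \<and> int b - int a < max (col (r,c)) (col (r,c) + x)"
            using False ua w(2) ra cb by (simp add: min_def max_def)
          then have "a + b < ht (r,c)" using bt t by blast
          then show False using hl by simp
        qed
      qed
      have "removable (rows_below D a) (u-a,v)"
        unfolding removable_iff[OF PB] using rm ua by simp
      moreover have "int v - int (u-a) = col (r-a,c) + x" using w(2) ua ra by simp
      moreover have "(u-a) + v + 1 = ht (r-a,c)" using w(3) ua ra by simp
      moreover have "\<forall>u' v'. (u',v') \<in> rows_below D a \<longrightarrow> min (col (r-a,c)) (col (r-a,c) + x) < int v' - int u' \<and> int v' - int u' < max (col (r-a,c)) (col (r-a,c) + x) \<longrightarrow> u' + v' < ht (r-a,c)"
      proof (intro allI impI)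
        fix u' v' assume h: "(u',v') \<in> rows_below D a" "min (col (r-a,c)) (col (r-a,c) + x) < int v' - int u' \<and> int v' - int u' < max (col (r-a,c)) (col (r-a,c) + x)"
        have "(u'+a,v') \<in> D" using h(1) by simp
        moreover have "min (col (r,c)) (col (r,c) + x) < int v' - int (u'+a) \<and> int v' - int (u'+a) < max (col (r,c)) (col (r,c) + x)"
          using h(2) ra by (simp add: min_def max_def split: if_splits)
        ultimately have "u' + a + v' < ht (r,c)" using bt by blast
        then show "u' + v' < ht (r-a,c)" using ra by simp
      qed
      ultimately show "x \<in> Xset (rows_below D a) (r-a,c)" unfolding Xset_iff by blast
    next
      assume "x \<in> Xset (rows_below D a) (r-a,c)"
      then obtain u v where w: "removable (rows_below D a) (u,v)" "int v - int u = col (r-a,c) + x" "u + v + 1 = ht (r-a,c)"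
        and bt: "\<forall>u' v'. (u',v') \<in> rows_below D a \<longrightarrow> min (col (r-a,c)) (col (r-a,c) + x) < int v' - int u' \<and> int v' - int u' < max (col (r-a,c)) (col (r-a,c) + x) \<longrightarrow> u' + v' < ht (r-a,c)"
        unfolding Xset_iff by blast
      have rm: "0 < u" "(u+a,v) \<in> D" "(u+1+a,v) \<notin> D" "(u+a,v+1) \<notin> D" using w(1) removable_iff[OF PB] by auto
      have "removable D (u+a,v)" unfolding removable_iff[OF P] using rm by (simp add: add_ac)
      moreover have "int v - int (u+a) = col (r,c) + x" using w(2) ra by simp
      moreover have "(u+a) + v + 1 = ht (r,c)" using w(3) ra by simp
      moreover have "\<forall>u' v'. (u',v') \<in> D \<longrightarrow> min (col (r,c)) (col (r,c) + x) < int v' - int u' \<and> int v' - int u' < max (col (r,c)) (col (r,c) + x) \<longrightarrow> u' + v' < ht (r,c)"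
      proof (intro allI impI)
        fix u' v' assume h: "(u',v') \<in> D" "min (col (r,c)) (col (r,c) + x) < int v' - int u' \<and> int v' - int u' < max (col (r,c)) (col (r,c) + x)"
        show "u' + v' < ht (r,c)"
        proof (cases "a < u'")
          case True
          have "(u'-a,v') \<in> rows_below D a" using h(1) True by simp
          moreover have "min (col (r-a,c)) (col (r-a,c) + x) < int v' - int (u'-a) \<and> int v' - int (u'-a) < max (col (r-a,c)) (col (r-a,c) + x)"
            using h(2) ra True by (simp add: min_def max_def split: if_splits)
          ultimately have "u' - a + v' < ht (r-a,c)" using bt by blast
          then show ?thesis using ra True by simp
        next
          case False
          have "int v' - int u' < max (int c - int r) (int v - int (u+a))"
            using h(2) w(2) ra by (simp add: max_def split: if_splits)
          then show ?thesis using False ra w(3) by (simp add: max_def split: if_splits)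
        qed
      qed
      ultimately show "x \<in> Xset D (r,c)" unfolding Xset_iff by blast
    qed
  qed
qed


lemma caseB_below:
  assumes IH: "\<And>D' l'. card D' < card D \<Longrightarrow> is_partition D' \<Longrightarrow> addable D' l' \<Longrightarrow>
      F (insert l' D') + (\<Sum>x\<in>Xset D' l'. F (bracket D' (col l') x)) = 2 * F D'"
    and P: "is_partition D" and A: "addable D (r,c)" and t: "(a,b) \<in> D"
    and Ht: "\<forall>p\<in>D. ht p \<le> a+b" and hl: "r + c \<le> a + b" and ra: "a < r"
  shows "F (insert (r,c) D) + (\<Sum>x\<in>Xset D (r,c). F (bracket D (col (r,c)) x)) = 2 * F D"
proof -
  have al: "(r,c) \<notin> D" "1 \<le> r" "1 \<le> c" "1 < r \<longrightarrow> (r-1,c) \<in> D" "1 < c \<longrightarrow> (r,c-1) \<in> D"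
    using A addable_iff[OF P] by auto
  have a1: "1 \<le> a" "1 \<le> b" using part_pos[OF P t] by auto
  have rc1: "(r-1,c) \<in> D" using al ra a1 by simp
  have cb: "c \<le> b"
  proof (rule ccontr)
    assume "\<not> c \<le> b"
    then have "(a,c) \<in> D" using part_down[OF P rc1, of a c] ra a1 al by simp
    then show False using bspec[OF Ht, of "(a,c)"] \<open>\<not> c \<le> b\<close> by simp
  qed
  define B where "B = rows_below D a"
  have PB: "is_partition B" unfolding B_def by (rule part_rows_below[OF P])
  have AB: "addable B (r-a,c)"
  proof -
    have "(r-a,c) \<notin> B \<and> 1 \<le> r-a \<and> 1 \<le> c \<and> (1 < r-a \<longrightarrow> (r-a-1,c) \<in> B) \<and> (1 < c \<longrightarrow> (r-a,c-1) \<in> B)"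
      unfolding B_def using al ra rc1 by auto
    then show ?thesis using addable_iff[OF PB] by simp
  qed
  have cardB: "card B < card D" unfolding B_def by (rule card_rows_below_less[OF part_fin[OF P] t])
  have IHB: "F (insert (r-a,c) B) + (\<Sum>x\<in>Xset B (r-a,c). F (bracket B (col (r-a,c)) x)) = 2 * F B"
    using IH[OF cardB PB AB] .
  have XS: "Xset D (r,c) = Xset B (r-a,c)" unfolding B_def by (rule Xset_below[OF P A t Ht hl ra cb])
  define K where "K = (a+b) choose a"
  have FD: "F D = K * F B * F (cols_right D b)" unfolding K_def B_def by (rule F_at[OF P t Ht])
  have FI: "F (insert (r,c) D) = K * F (insert (r-a,c) B) * F (cols_right D b)"
  proof -
    have PI: "is_partition (insert (r,c) D)" using A unfolding addable_def by simp
    have HI: "\<forall>p\<in>insert (r,c) D. ht p \<le> a+b" using Ht hl by auto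
    have "F (insert (r,c) D) = K * F (rows_below (insert (r,c) D) a) * F (cols_right (insert (r,c) D) b)"
      unfolding K_def by (rule F_at[OF PI _ HI]) (use t in simp)
    moreover have "rows_below (insert (r,c) D) a = insert (r-a,c) B"
      unfolding B_def using ra by (intro pair_set_eqI) auto
    moreover have "cols_right (insert (r,c) D) b = cols_right D b"
      using cb by (intro pair_set_eqI) auto
    ultimately show ?thesis by simp
  qed
  have termx: "F (bracket D (col (r,c)) x) = K * F (bracket B (col (r-a,c)) x) * F (cols_right D b)"
    if xB: "x \<in> Xset B (r-a,c)" for x
  proof -
    have xD: "x \<in> Xset D (r,c)" using XS xB by simp
    obtain u v where w: "removable B (u,v)" "int v - int u = col (r-a,c) + x" "u + v + 1 = ht (r-a,c)"
      using xB unfolding Xset_iff by blast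
    have uvD: "0 < u" "(u+a,v) \<in> D" using w(1) removable_iff[OF PB] B_def by auto
    have "u + a + v \<le> a + b" using bspec[OF Ht uvD(2)] by simp
    then have vb: "int v - int u - int a < int b - int a" using uvD by simp
    have rk: "k < int b - int a" if "k \<in> rng (col (r,c)) x" for k
      using that w(2) vb ra cb by (auto simp: rng_iff)
    define E where "E = bracket D (col (r,c)) x"
    have PE: "is_partition E" unfolding E_def by (rule bracket_part[OF P A xD])
    have tE: "(a,b) \<in> E" unfolding E_def mem_bracket[OF P] using t rk by force
    have HE: "\<forall>p\<in>E. ht p \<le> a+b"
    proof
      fix p assume "p \<in> E"
      then have "p \<in> D" using bracket_sub unfolding E_def by blast
      then show "ht p \<le> a+b" using bspec[OF Ht \<open>p \<in> D\<close>] by simp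
    qed
    have "F E = K * F (rows_below E a) * F (cols_right E b)" unfolding K_def by (rule F_at[OF PE tE HE])
    moreover have "rows_below E a = bracket B (col (r-a,c)) x"
    proof -
      have ee: "col (r,c) + int a = col (r-a,c)" using ra by (simp add: of_nat_diff algebra_simps)
      show ?thesis unfolding E_def bracket_rows_below[OF P] B_def ee ..
    qed
    moreover have "cols_right E b = cols_right D b"
      unfolding E_def bracket_cols_right[OF P]
    proof (rule bracket_id[OF part_cols_right[OF P]])
      fix u' v' assume uv: "(u',v') \<in> cols_right D b"
      then have h: "0 < v'" "(u', v'+b) \<in> D" by auto
      have "u' + v' + b \<le> a + b" using bspec[OF Ht h(2)] by simp
      then have "int v' - int u' > - int a" using h by simp
      moreover have "k - int b < - int a" if "k \<in> rng (col (r,c)) x" for k using rk[OF that] by simp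
      ultimately show "int v' - int u' \<notin> rng (col (r,c) - int b) x"
        using rng_shift[of "int v' - int u'" "col (r,c)" "- int b" x] by force
    qed
    ultimately show ?thesis unfolding E_def by simp
  qed
  have "(\<Sum>x\<in>Xset D (r,c). F (bracket D (col (r,c)) x)) = (\<Sum>x\<in>Xset B (r-a,c). K * F (bracket B (col (r-a,c)) x) * F (cols_right D b))"
    unfolding XS by (rule sum.cong[OF refl]) (rule termx)
  also have "\<dots> = K * F (cols_right D b) * (\<Sum>x\<in>Xset B (r-a,c). F (bracket B (col (r-a,c)) x))"
    by (simp add: sum_distrib_left mult_ac)
  finally have S: "(\<Sum>x\<in>Xset D (r,c). F (bracket D (col (r,c)) x)) = K * F (cols_right D b) * (\<Sum>x\<in>Xset B (r-a,c). F (bracket B (col (r-a,c)) x))" .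
  have "F (insert (r,c) D) + (\<Sum>x\<in>Xset D (r,c). F (bracket D (col (r,c)) x))
      = K * F (cols_right D b) * (F (insert (r-a,c) B) + (\<Sum>x\<in>Xset B (r-a,c). F (bracket B (col (r-a,c)) x)))"
    unfolding S FI by (simp add: algebra_simps)
  also have "\<dots> = 2 * F D" unfolding IHB FD by (simp add: mult_ac)
  finally show ?thesis .
qed

lemma main:
  "is_partition D \<Longrightarrow> addable D l \<Longrightarrow> F (insert l D) + (\<Sum>x\<in>Xset D l. F (bracket D (col l) x)) = 2 * F D"
proof (induction "card D" arbitrary: D l rule: less_induct)
  case less
  note P = less.prems(1)
  obtain r c where l: "l = (r,c)" by (cases l)
  have A: "addable D (r,c)" using less.prems(2) l by simp
  have al: "(r,c) \<notin> D" "1 \<le> r" "1 \<le> c" using A addable_iff[OF P] by auto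
  have IH: "\<And>D' l'. card D' < card D \<Longrightarrow> is_partition D' \<Longrightarrow> addable D' l' \<Longrightarrow>
      F (insert l' D') + (\<Sum>x\<in>Xset D' l'. F (bracket D' (col l') x)) = 2 * F D'"
    using less.hyps by blast
  show ?case
  proof (cases "\<forall>p\<in>D. ht p < r + c")
    case True
    show ?thesis unfolding l by (rule caseA[OF P A True])
  next
    case False
    then obtain q where q: "q \<in> D" "r + c \<le> ht q" by (auto simp: not_less)
    have fin: "finite D" using part_fin[OF P] .
    have ne: "D \<noteq> {}" using q by auto
    obtain a b where tt: "top_node D = (a,b)" by (cases "top_node D") auto
    have t: "(a,b) \<in> D" and Ht: "\<forall>m\<in>D. ht m \<le> a+b" using top_node_prop[OF fin ne] tt by auto
    have hl: "r + c \<le> a + b" using bspec[OF Ht q(1)] q(2) by simp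
    show ?thesis
    proof (cases "a < r")
      case True
      show ?thesis unfolding l by (rule caseB_below[OF IH P A t Ht hl True])
    next
      case False
      have bc: "b < c"
      proof (rule ccontr)
        assume "\<not> b < c"
        then have "(r,c) \<in> D" using part_down[OF P t, of r c] False al by simp
        then show False using al by simp
      qed
      have PT: "is_partition (trn D)" by (rule part_trn[OF P])
      have AT: "addable (trn D) (c,r)" using addable_trn[OF P] A by simp
      have tT: "(b,a) \<in> trn D" using t by simp
      have HtT: "\<forall>p\<in>trn D. ht p \<le> b+a"
      proof
        fix p assume pm: "p \<in> trn D"
        obtain u v where p: "p = (u,v)" by (cases p)
        have "(v,u) \<in> D" using pm p by simp
        then show "ht p \<le> b+a" using bspec[OF Ht \<open>(v,u) \<in> D\<close>] p by simp
      qed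
      have IHT: "\<And>D' l'. card D' < card (trn D) \<Longrightarrow> is_partition D' \<Longrightarrow> addable D' l' \<Longrightarrow>
          F (insert l' D') + (\<Sum>x\<in>Xset D' l'. F (bracket D' (col l') x)) = 2 * F D'"
        using IH card_trn[of D] by simp
      have R: "F (insert (c,r) (trn D)) + (\<Sum>x\<in>Xset (trn D) (c,r). F (bracket (trn D) (col (c,r)) x)) = 2 * F (trn D)"
      proof -
        have hlT: "c + r \<le> b + a" using hl by (simp add: add.commute)
        show ?thesis by (rule caseB_below[OF IHT PT AT tT HtT hlT bc])
      qed
      have PI: "is_partition (insert (r,c) D)" using A unfolding addable_def by simp
      have "F (insert (c,r) (trn D)) = F (insert (r,c) D)"
        unfolding trn_insert[symmetric] by (rule F_trn[OF PI])
      moreover note sum_trn_all[OF P A]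
      moreover note F_trn[OF P]
      ultimately show ?thesis using R l by simp
    qed
  qed
qed

theorem proposition5p13:
  fixes D :: "node set" and l :: node and j :: int
  assumes "is_partition D"
    and "addable D l"
    and "col l = j"
  shows "F (insert l D) + (\<Sum>x\<in>Xset D l. F (bracket D j x)) = 2 * F D"
  using main[OF assms(1,2)] assms(3) by simp

end
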